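(* Let $f:\mathbb{R}^d\to\mathbb{R}$ be differentiable with $L$-Lipschitz gradient and $c$-strongly convex, with minimizer $\vec x^*$. Consider parallel-step SGD iterations with $p$ processors (as defined in the context) with constant learning rate $\alpha\le\frac{1}{4L}$ satisfying elastic consistency with constant $B$. Then for every $t\ge0$, $$\mathbb{E}\|\vec x_{t+1}-\vec x^*\|^2\le\Big(1-\frac{\alpha c}{4}\Big)\mathbb{E}\|\vec x_t-\vec x^*\|^2+\frac{2\alpha^3L^2B^2}{c}+\frac{2\alpha^2\sigma^2}{p}+4L^2\alpha^4B^2.$$
   Context: $c$-strong convexity ($c>0$) means $(\vec x-\vec y)^\top(\nabla f(\vec x)-\nabla f(\vec y))\ge c\|\vec x-\vec y\|^2$ for all $\vec x,\vec y$. All random objects live on a probability space with a filtration $(\mathcal F_t)_{t\ge0}$. Parallel-step SGD iterations with $p$ processors: $\vec x_0\in\mathbb{R}^d$ is deterministic. For each $t\ge0$ a set $I_t\subseteq\{1,\dots,p\}$ with $p/2\le|I_t|\le p$ is given (fixed independently of the algorithm's randomness). Each $i\in I_t$ holds a view $\vec v_t^i$; $\vec x_t$ and all $\vec v_t^i$ are $\mathcal F_t$-measurable. Each $i\in I_t$ computes an $\mathcal F_{t+1}$-measurable stochastic gradient $\tilde G(\vec v_t^i)$; conditionally on $\mathcal F_t$ these are independent across $i\in I_t$, with $\mathbb{E}[\tilde G(\vec v_t^i)\mid\mathcal F_t]=\nabla f(\vec v_t^i)$ and $\mathbb{E}[\|\tilde G(\vec v_t^i)-\nabla f(\vec v_t^i)\|^2\mid\mathcal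 F_t]\le\sigma^2$. Update: $\vec x_{t+1}=\vec x_t-\frac{\alpha}{p}\sum_{i\in I_t}\tilde G(\vec v_t^i)$. Elastic consistency with constant $B>0$: $\mathbb{E}\|\vec x_t-\vec v_t^i\|^2\le\alpha^2B^2$ for all $t$ and all $i\in I_t$. *)

theory Defs
  imports "HOL-Probability.Probability"
begin

definition cond_indep_vars ::
  "'a measure \<Rightarrow> 'a measure \<Rightarrow> ('i \<Rightarrow> 'a \<Rightarrow> 'b::topological_space) \<Rightarrow> 'i set \<Rightarrow> bool" where
  "cond_indep_vars M F X I \<longleftrightarrow>
     (\<forall>J A. J \<subseteq> I \<longrightarrow> finite J \<longrightarrow> (\<forall>i\<in>J. A i \<in> sets borel) \<longrightarrow>
        (AE \<omega> in M. real_cond_exp M F (\<lambda>\<omega>'. \<Prod>i\<in>J. indicator (A i) (X i \<omega>')) \<omega>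
                   = (\<Prod>i\<in>J. real_cond_exp M F (\<lambda>\<omega>'. indicator (A i) (X i \<omega>')) \<omega>)))"

end

theory Submission
  imports Defs
begin

lemma line_deriv:
  fixes f :: "'v::real_inner \<Rightarrow> real"
  assumes "\<And>y. GDERIV f y :> gradf y"
  shows "((\<lambda>s. f (y + s *\<^sub>R u)) has_real_derivative (gradf (y + s *\<^sub>R u) \<bullet> u)) (at s)"
proof -
  have 1: "((\<lambda>s. y + s *\<^sub>R u) has_derivative (\<lambda>h. h *\<^sub>R u)) (at s)"
    by (auto intro!: derivative_eq_intros)
  have 2: "(f has_derivative (\<lambda>h. h \<bullet> gradf (y + s *\<^sub>R u))) (at (y + s *\<^sub>R u))"
    using assms[of "y + s *\<^sub>R u"] unfolding gderiv_def .
  have "((\<lambda>s. f (y + s *\<^sub>R u)) has_derivative (\<lambda>h. (h *\<^sub>R u) \<bullet> gradf (y + s *\<^sub>R u))) (at s)"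
    using has_derivative_compose[OF 1 2] by simp
  moreover have "(\<lambda>h. (h *\<^sub>R u) \<bullet> gradf (y + s *\<^sub>R u)) = (*) (gradf (y + s *\<^sub>R u) \<bullet> u)"
    by (auto simp: fun_eq_iff inner_commute)
  ultimately show ?thesis unfolding has_field_derivative_def by simp
qed

lemma descent:
  fixes f :: "'v::real_inner \<Rightarrow> real"
  assumes grad: "\<And>y. GDERIV f y :> gradf y" and lip: "L-lipschitz_on UNIV gradf"
  shows "f (y + u) \<le> f y + gradf y \<bullet> u + L / 2 * (norm u)\<^sup>2"
proof -
  define g where "g s = f (y + s *\<^sub>R u) - s * (gradf y \<bullet> u) - L / 2 * s\<^sup>2 * (norm u)\<^sup>2" for s
  have "g 1 \<le> g 0"
  proof (rule DERIV_nonpos_imp_nonincreasing[of 0 1 g])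
    fix s :: real assume s: "0 \<le> s" "s \<le> 1"
    have d: "(g has_real_derivative (gradf (y + s *\<^sub>R u) \<bullet> u - gradf y \<bullet> u - L / 2 * (2 * s) * (norm u)\<^sup>2)) (at s)"
      unfolding g_def
      by (rule line_deriv[OF grad] derivative_eq_intros refl | simp)+
    have "gradf (y + s *\<^sub>R u) \<bullet> u - gradf y \<bullet> u = (gradf (y + s *\<^sub>R u) - gradf y) \<bullet> u"
      by (simp add: inner_diff_left)
    also have "\<dots> \<le> norm (gradf (y + s *\<^sub>R u) - gradf y) * norm u"
      by (rule norm_cauchy_schwarz)
    also have "\<dots> \<le> (L * norm (s *\<^sub>R u)) * norm u"
      using lipschitz_onD[OF lip, of "y + s *\<^sub>R u" y] by (intro mult_right_mono) (auto simp: dist_norm)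
    also have "\<dots> = L * s * (norm u)\<^sup>2" using s by (simp add: power2_eq_square)
    finally show "\<exists>d. (g has_real_derivative d) (at s) \<and> d \<le> 0"
      using d by (intro exI[of _ "gradf (y + s *\<^sub>R u) \<bullet> u - gradf y \<bullet> u - L / 2 * (2 * s) * (norm u)\<^sup>2"]) auto
  qed simp
  then show ?thesis unfolding g_def by simp
qed

lemma convex_ineq:
  fixes f :: "'v::real_inner \<Rightarrow> real"
  assumes grad: "\<And>y. GDERIV f y :> gradf y"
    and mono: "\<And>y z. (y - z) \<bullet> (gradf y - gradf z) \<ge> 0"
  shows "f y + gradf y \<bullet> (z - y) \<le> f z"
proof -
  define w where "w = z - y"
  define g where "g s = f (y + s *\<^sub>R w) - s * (gradf y \<bullet> w)" for s
  have "g 0 \<le> g 1"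
  proof (rule DERIV_nonneg_imp_nondecreasing[of 0 1 g])
    fix s :: real assume s: "0 \<le> s" "s \<le> 1"
    have d: "(g has_real_derivative (gradf (y + s *\<^sub>R w) \<bullet> w - gradf y \<bullet> w)) (at s)"
      unfolding g_def
      by (rule line_deriv[OF grad] derivative_eq_intros refl | simp)+
    have "s * (gradf (y + s *\<^sub>R w) \<bullet> w - gradf y \<bullet> w) = ((y + s *\<^sub>R w) - y) \<bullet> (gradf (y + s *\<^sub>R w) - gradf y)"
      by (simp add: inner_diff_left inner_diff_right inner_commute algebra_simps)
    also have "\<dots> \<ge> 0" by (rule mono)
    finally have "s * (gradf (y + s *\<^sub>R w) \<bullet> w - gradf y \<bullet> w) \<ge> 0" .
    then have "s = 0 \<or> gradf (y + s *\<^sub>R w) \<bullet> w - gradf y \<bullet> w \<ge> 0"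
      using s by (auto simp: zero_le_mult_iff)
    then have "gradf (y + s *\<^sub>R w) \<bullet> w - gradf y \<bullet> w \<ge> 0" by auto
    then show "\<exists>d. (g has_real_derivative d) (at s) \<and> d \<ge> 0" using d by blast
  qed simp
  then show ?thesis unfolding g_def w_def by (simp add: inner_commute)
qed

lemma cocoercive:
  fixes f :: "'v::real_inner \<Rightarrow> real"
  assumes grad: "\<And>y. GDERIV f y :> gradf y" and lip: "L-lipschitz_on UNIV gradf"
    and L: "L > 0"
    and mono: "\<And>y z. (y - z) \<bullet> (gradf y - gradf z) \<ge> 0"
    and minimizer: "\<And>y. f xs \<le> f y"
  shows "(norm (gradf x))\<^sup>2 \<le> 2 * L * ((x - xs) \<bullet> gradf x)"
proof -
  define h where "h = gradf x"
  have "f xs \<le> f (x + (- (1/L)) *\<^sub>R h)" by (rule minimizer)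
  also have "\<dots> \<le> f x + h \<bullet> ((- (1/L)) *\<^sub>R h) + L / 2 * (norm ((- (1/L)) *\<^sub>R h))\<^sup>2"
    unfolding h_def by (rule descent[OF grad lip])
  also have "\<dots> = f x - (norm h)\<^sup>2 / (2 * L)"
  proof -
    have hh: "h \<bullet> h = (norm h)\<^sup>2" by (simp add: power2_norm_eq_inner)
    show ?thesis using L by (simp add: hh power2_eq_square field_simps)
  qed
  finally have 1: "f xs \<le> f x - (norm h)\<^sup>2 / (2 * L)" .
  have 2: "f x + h \<bullet> (xs - x) \<le> f xs" unfolding h_def by (rule convex_ineq[OF grad mono])
  have "(norm h)\<^sup>2 / (2 * L) \<le> h \<bullet> (x - xs)"
    using 1 2 by (simp add: inner_diff_right)
  then show ?thesis using L unfolding h_def by (simp add: field_simps inner_commute)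
qed

lemma norm_sum_sq:
  fixes w :: "'i \<Rightarrow> 'v::real_normed_vector"
  shows "(norm (\<Sum>i\<in>I. w i))\<^sup>2 \<le> real (card I) * (\<Sum>i\<in>I. (norm (w i))\<^sup>2)"
proof -
  have "(norm (\<Sum>i\<in>I. w i))\<^sup>2 \<le> (\<Sum>i\<in>I. norm (w i))\<^sup>2"
    by (rule power_mono[OF norm_sum]) simp
  also have "\<dots> \<le> (\<Sum>i\<in>I. (norm (w i))\<^sup>2) * real (card I)"
    by (rule sum_squared_le_sum_of_squares)
  finally show ?thesis by (simp add: mult.commute)
qed

lemma amgm2: fixes c a b :: real assumes "c > 0" shows "2 * a * b \<le> c / 2 * a\<^sup>2 + 2 / c * b\<^sup>2"
proof -
  have "0 \<le> c / 2 * (a - 2 / c * b)\<^sup>2" using assms by simp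
  also have "\<dots> = c / 2 * a\<^sup>2 + 2 / c * b\<^sup>2 - 2 * a * b"
    using assms by (simp add: power2_eq_square field_simps)
  finally show ?thesis by simp
qed

lemma det_bound:
  fixes gradf :: "'v::real_inner \<Rightarrow> 'v" and v :: "nat \<Rightarrow> 'v"
  assumes L: "L > 0" and c: "c > 0" and al: "\<alpha> > 0" "\<alpha> \<le> 1 / (4 * L)"
    and lip: "L-lipschitz_on UNIV gradf"
    and coco: "(norm (gradf x))\<^sup>2 \<le> 2 * L * ((x - xs) \<bullet> gradf x)"
    and strongx: "(x - xs) \<bullet> gradf x \<ge> c * (norm (x - xs))\<^sup>2"
    and p: "p > 0" and kp: "card I \<le> p" "real p \<le> 2 * real (card I)"
  shows "(norm (x - xs - (\<alpha> / real p) *\<^sub>R (\<Sum>i\<in>I. gradf (v i))))\<^sup>2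
     \<le> (1 - \<alpha> * c / 4) * (norm (x - xs))\<^sup>2
       + (2 * \<alpha> / c + 2 * \<alpha>\<^sup>2) * (real (card I) * L\<^sup>2 / (real p)\<^sup>2) * (\<Sum>i\<in>I. (norm (x - v i))\<^sup>2)"
proof -
  define k where "k = real (card I)"
  define d where "d = x - xs"
  define h where "h = gradf x"
  define a where "a = k / real p"
  define E where "E = (1 / real p) *\<^sub>R (\<Sum>i\<in>I. gradf (v i) - h)"
  define D where "D = (norm d)\<^sup>2"
  define q where "q = d \<bullet> h"
  define SS where "SS = (\<Sum>i\<in>I. (norm (x - v i))\<^sup>2)"
  have a1: "a \<le> 1" "a \<ge> 1/2" using kp p unfolding a_def k_def by (auto simp: field_simps)
  have q0: "q \<ge> c * D" using strongx unfolding q_def D_def d_def h_def .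
  have D0: "D \<ge> 0" unfolding D_def by simp
  have q00: "q \<ge> 0" using q0 D0 c by (metis mult_nonneg_nonneg less_imp_le order_trans)
  have hq: "(norm h)\<^sup>2 \<le> 2 * L * q" using coco unfolding q_def h_def d_def .
  have sumeq: "(\<alpha> / real p) *\<^sub>R (\<Sum>i\<in>I. gradf (v i)) = \<alpha> *\<^sub>R (a *\<^sub>R h + E)"
  proof -
    have "(\<Sum>i\<in>I. gradf (v i)) = (\<Sum>i\<in>I. gradf (v i) - h) + k *\<^sub>R h"
      unfolding k_def by (simp add: sum_subtractf sum_constant_scaleR)
    then show ?thesis using p unfolding E_def a_def
      by (simp add: scaleR_add_right scaleR_scaleR field_simps)
  qed
  have Y: "x - xs - (\<alpha> / real p) *\<^sub>R (\<Sum>i\<in>I. gradf (v i)) = d - \<alpha> *\<^sub>R (a *\<^sub>R h + E)"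
    unfolding sumeq d_def ..
  have exp: "(norm (d - \<alpha> *\<^sub>R (a *\<^sub>R h + E)))\<^sup>2 = D - 2 * \<alpha> * a * q - 2 * \<alpha> * (d \<bullet> E) + \<alpha>\<^sup>2 * (norm (a *\<^sub>R h + E))\<^sup>2"
  proof -
    have g: "(norm (d - s *\<^sub>R w))\<^sup>2 = (norm d)\<^sup>2 - 2 * s * (d \<bullet> w) + s\<^sup>2 * (norm w)\<^sup>2" for s and w :: 'v
      by (simp add: power2_norm_eq_inner inner_diff_left inner_diff_right inner_commute algebra_simps)
        (simp add: power2_eq_square)
    show ?thesis unfolding g D_def q_def by (simp add: inner_add_right algebra_simps)
  qed
  have n1: "(norm (a *\<^sub>R h + E))\<^sup>2 \<le> 2 * a\<^sup>2 * (norm h)\<^sup>2 + 2 * (norm E)\<^sup>2"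
  proof -
    have "(norm (a *\<^sub>R h + E))\<^sup>2 \<le> (norm (a *\<^sub>R h) + norm E)\<^sup>2"
      by (rule power_mono[OF norm_triangle_ineq]) simp
    also have "\<dots> \<le> 2 * (norm (a *\<^sub>R h))\<^sup>2 + 2 * (norm E)\<^sup>2"
      using amgm2[of 2 "norm (a *\<^sub>R h)" "norm E"] by (simp add: power2_eq_square algebra_simps)
    also have "\<dots> = 2 * a\<^sup>2 * (norm h)\<^sup>2 + 2 * (norm E)\<^sup>2"
      by (simp add: power_mult_distrib)
    finally show ?thesis .
  qed
  have n2: "- 2 * \<alpha> * (d \<bullet> E) \<le> \<alpha> * c / 2 * D + 2 * \<alpha> / c * (norm E)\<^sup>2"
  proof -
    have "- (d \<bullet> E) \<le> norm d * norm E"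
      using norm_cauchy_schwarz[of d "-E"] by simp
    then have "- 2 * (d \<bullet> E) \<le> 2 * norm d * norm E" by (simp add: mult.commute)
    also have "\<dots> \<le> c / 2 * D + 2 / c * (norm E)\<^sup>2" unfolding D_def by (rule amgm2[OF c])
    finally have "- 2 * (d \<bullet> E) \<le> c / 2 * D + 2 / c * (norm E)\<^sup>2" .
    from mult_left_mono[OF this, of \<alpha>] al show ?thesis by (simp add: algebra_simps)
  qed
  have nE: "(norm E)\<^sup>2 \<le> k * L\<^sup>2 / (real p)\<^sup>2 * SS"
  proof -
    have "(norm E)\<^sup>2 = (norm (\<Sum>i\<in>I. gradf (v i) - h))\<^sup>2 / (real p)\<^sup>2"
      unfolding E_def using p by (simp add: power_divide)
    also have "\<dots> \<le> k * (\<Sum>i\<in>I. (norm (gradf (v i) - h))\<^sup>2) / (real p)\<^sup>2"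
      unfolding k_def by (intro divide_right_mono norm_sum_sq) simp
    also have "\<dots> \<le> k * (\<Sum>i\<in>I. L\<^sup>2 * (norm (x - v i))\<^sup>2) / (real p)\<^sup>2"
    proof -
      have "(norm (gradf (v i) - h))\<^sup>2 \<le> L\<^sup>2 * (norm (x - v i))\<^sup>2" for i
      proof -
        have "norm (gradf (v i) - h) \<le> L * norm (x - v i)"
          using lipschitz_onD[OF lip, of "v i" x] unfolding h_def by (simp add: dist_norm norm_minus_commute)
        from power_mono[OF this] show ?thesis by (simp add: power_mult_distrib)
      qed
      then show ?thesis unfolding k_def
        by (intro divide_right_mono mult_left_mono sum_mono) auto
    qed
    also have "\<dots> = k * L\<^sup>2 / (real p)\<^sup>2 * SS" unfolding SS_def by (simp add: sum_distrib_left sum_divide_distrib mult.assoc)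
    finally show ?thesis .
  qed
  have aL: "2 * \<alpha> * L \<le> 1 / 2" using al L by (simp add: field_simps)
  have s1: "(norm (d - \<alpha> *\<^sub>R (a *\<^sub>R h + E)))\<^sup>2 \<le> D - 2 * \<alpha> * a * q + \<alpha> * c / 2 * D + 2 * \<alpha> / c * (norm E)\<^sup>2
        + \<alpha>\<^sup>2 * (2 * a\<^sup>2 * (norm h)\<^sup>2) + \<alpha>\<^sup>2 * (2 * (norm E)\<^sup>2)"
    unfolding exp using n2 mult_left_mono[OF n1, of "\<alpha>\<^sup>2"] by (simp add: algebra_simps)
  have s2: "\<alpha>\<^sup>2 * (2 * a\<^sup>2 * (norm h)\<^sup>2) \<le> \<alpha> * a\<^sup>2 * q"
  proof -
    have "\<alpha>\<^sup>2 * (2 * a\<^sup>2 * (norm h)\<^sup>2) \<le> \<alpha>\<^sup>2 * (2 * a\<^sup>2 * (2 * L * q))"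
      using hq by (intro mult_left_mono) auto
    also have "\<dots> = \<alpha> * a\<^sup>2 * q * (2 * (2 * \<alpha> * L))"
      by (simp add: power2_eq_square)
    also have "\<dots> \<le> \<alpha> * a\<^sup>2 * q * (2 * (1/2))"
      using aL al q00 by (intro mult_left_mono) auto
    finally show ?thesis by simp
  qed
  have s3: "\<alpha> * (3/4) * (c * D) \<le> \<alpha> * (2 * a - a\<^sup>2) * q"
  proof -
    have "2 * a - a\<^sup>2 \<ge> 3/4"
    proof -
      have "(1 - a)\<^sup>2 \<le> (1/2)\<^sup>2" using a1 by (intro power_mono) auto
      then show ?thesis by (simp add: power2_eq_square algebra_simps)
    qed
    then show ?thesis
      using al q0 c D0 by (intro mult_mono mult_left_mono) auto
  qed
  have s4: "(2 * \<alpha> / c + 2 * \<alpha>\<^sup>2) * (norm E)\<^sup>2 \<le> (2 * \<alpha> / c + 2 * \<alpha>\<^sup>2) * (k * L\<^sup>2 / (real p)\<^sup>2 * SS)"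
    using nE al c by (intro mult_left_mono) auto
  have e1: "\<alpha> * (2 * a - a\<^sup>2) * q = 2 * \<alpha> * a * q - \<alpha> * a\<^sup>2 * q" by (simp add: algebra_simps)
  have e2: "(2 * \<alpha> / c + 2 * \<alpha>\<^sup>2) * (norm E)\<^sup>2 = 2 * \<alpha> / c * (norm E)\<^sup>2 + \<alpha>\<^sup>2 * (2 * (norm E)\<^sup>2)"
    by (simp add: algebra_simps)
  have e3: "(2 * \<alpha> / c + 2 * \<alpha>\<^sup>2) * (k * L\<^sup>2 / (real p)\<^sup>2 * SS) = (2 * \<alpha> / c + 2 * \<alpha>\<^sup>2) * (k * L\<^sup>2 / (real p)\<^sup>2) * SS"
    by (simp add: algebra_simps)
  have e4: "(1 - \<alpha> * c / 4) * D = D - \<alpha> * (3/4) * (c * D) + \<alpha> * c / 2 * D" by (simp add: algebra_simps)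
  have "(norm (d - \<alpha> *\<^sub>R (a *\<^sub>R h + E)))\<^sup>2 \<le> (1 - \<alpha> * c / 4) * D + (2 * \<alpha> / c + 2 * \<alpha>\<^sup>2) * (k * L\<^sup>2 / (real p)\<^sup>2) * SS"
    using s1 s2 s3 s4 e1 e2 e3 e4 by linarith
  then show ?thesis unfolding Y D_def d_def SS_def k_def .
qed

lemma sfs: assumes "prob_space M" "subalgebra M F" shows "sigma_finite_subalgebra M F"
proof -
  interpret prob_space M by fact
  have "finite_measure_subalgebra M F"
    by (simp add: finite_measure_subalgebra_def finite_measure_subalgebra_axioms_def assms(2) finite_measure_axioms)
  then show ?thesis by (rule finite_measure_subalgebra_is_sigma_finite)
qed

lemma nn_integral_ext_distr:
  fixes X :: "'a \<Rightarrow> 'b::topological_space"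
  assumes X[measurable]: "X \<in> borel_measurable M"
    and h[measurable]: "h1 \<in> borel_measurable M" "h2 \<in> borel_measurable M"
    and eq: "\<And>A. A \<in> sets borel \<Longrightarrow> (\<integral>\<^sup>+\<omega>. h1 \<omega> * indicator A (X \<omega>) \<partial>M) = (\<integral>\<^sup>+\<omega>. h2 \<omega> * indicator A (X \<omega>) \<partial>M)"
    and phi[measurable]: "\<phi> \<in> borel_measurable borel"
  shows "(\<integral>\<^sup>+\<omega>. h1 \<omega> * \<phi> (X \<omega>) \<partial>M) = (\<integral>\<^sup>+\<omega>. h2 \<omega> * \<phi> (X \<omega>) \<partial>M)"
proof -
  have em: "emeasure (distr (density M h) borel X) A = (\<integral>\<^sup>+\<omega>. h \<omega> * indicator A (X \<omega>) \<partial>M)"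
    if [measurable]: "h \<in> borel_measurable M" "A \<in> sets borel" for h A
  proof -
    have "emeasure (distr (density M h) borel X) A = emeasure (density M h) (X -` A \<inter> space M)"
      by (subst emeasure_distr) auto
    also have "\<dots> = (\<integral>\<^sup>+\<omega>. h \<omega> * indicator (X -` A \<inter> space M) \<omega> \<partial>M)"
      by (subst emeasure_density) auto
    also have "\<dots> = (\<integral>\<^sup>+\<omega>. h \<omega> * indicator A (X \<omega>) \<partial>M)"
      by (intro nn_integral_cong) (auto simp: indicator_def)
    finally show ?thesis .
  qed
  have deq: "distr (density M h1) borel X = distr (density M h2) borel X"
    by (rule measure_eqI) (auto simp: em eq)
  have int: "(\<integral>\<^sup>+\<omega>. h \<omega> * \<phi> (X \<omega>) \<partial>M) = integral\<^sup>N (distr (density M h) borel X) \<phi>"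
    if [measurable]: "h \<in> borel_measurable M" for h
    by (subst nn_integral_distr) (auto simp: nn_integral_density)
  show ?thesis using deq int[of h1] int[of h2] by simp
qed

lemma nn_cond_exp_fin:
  assumes "prob_space M" "subalgebra M F" and [measurable]: "u \<in> borel_measurable M"
    and fin: "(\<integral>\<^sup>+\<omega>. u \<omega> \<partial>M) \<noteq> \<infinity>"
  shows "AE \<omega> in M. nn_cond_exp M F u \<omega> \<noteq> \<infinity>"
proof -
  interpret sigma_finite_subalgebra M F using sfs assms by blast
  have "(\<integral>\<^sup>+\<omega>. nn_cond_exp M F u \<omega> \<partial>M) = (\<integral>\<^sup>+\<omega>. u \<omega> \<partial>M)"
    using nn_cond_exp_intg[of "\<lambda>_. 1" u] by simp
  then show ?thesis using fin by (intro nn_integral_PInf_AE) auto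
qed

lemma nn_real_cond_exp:
  fixes f :: "'a \<Rightarrow> real"
  assumes "prob_space M" "subalgebra M F" and [measurable]: "f \<in> borel_measurable M"
    and pos: "\<And>\<omega>. f \<omega> \<ge> 0" and fin: "(\<integral>\<^sup>+\<omega>. ennreal (f \<omega>) \<partial>M) \<noteq> \<infinity>"
  shows "AE \<omega> in M. nn_cond_exp M F (\<lambda>\<omega>. ennreal (f \<omega>)) \<omega> = ennreal (real_cond_exp M F f \<omega>)
     \<and> real_cond_exp M F f \<omega> = enn2real (nn_cond_exp M F (\<lambda>\<omega>. ennreal (f \<omega>)) \<omega>)"
proof -
  interpret sigma_finite_subalgebra M F using sfs assms by blast
  have z: "(\<lambda>\<omega>. ennreal (- f \<omega>)) = (\<lambda>_. 0)" using pos by (auto simp: fun_eq_iff ennreal_neg)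
  have "AE \<omega> in M. (\<lambda>_. 0) \<omega> = nn_cond_exp M F (\<lambda>_. 0) \<omega>"
    by (rule nn_cond_exp_F_meas) simp
  moreover have "AE \<omega> in M. nn_cond_exp M F (\<lambda>\<omega>. ennreal (f \<omega>)) \<omega> \<noteq> \<infinity>"
    by (rule nn_cond_exp_fin[OF assms(1,2) _ fin]) simp
  ultimately show ?thesis
    unfolding real_cond_exp_def z by eventually_elim (auto simp: ennreal_enn2real top.not_eq_extremum)
qed

lemma nn_fin_bounded:
  fixes f :: "'a \<Rightarrow> real"
  assumes "prob_space M" "\<And>\<omega>. f \<omega> \<le> 1"
  shows "(\<integral>\<^sup>+\<omega>. ennreal (f \<omega>) \<partial>M) \<noteq> \<infinity>"
proof -
  interpret prob_space M by fact
  have "(\<integral>\<^sup>+\<omega>. ennreal (f \<omega>) \<partial>M) \<le> (\<integral>\<^sup>+\<omega>. 1 \<partial>M)"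
    using assms(2) by (intro nn_integral_mono) auto
  also have "\<dots> = 1" by (simp add: emeasure_space_1)
  finally show ?thesis by (auto simp: top_unique)
qed

lemma nn_real_cond_exp01:
  fixes f :: "'a \<Rightarrow> real"
  assumes P: "prob_space M" and S: "subalgebra M F" and [measurable]: "f \<in> borel_measurable M"
    and pos: "\<And>\<omega>. f \<omega> \<ge> 0" "\<And>\<omega>. f \<omega> \<le> 1"
  shows "AE \<omega> in M. nn_cond_exp M F (\<lambda>\<omega>. ennreal (f \<omega>)) \<omega> = ennreal (real_cond_exp M F f \<omega>)
     \<and> real_cond_exp M F f \<omega> \<ge> 0"
proof -
  have "AE \<omega> in M. nn_cond_exp M F (\<lambda>\<omega>. ennreal (f \<omega>)) \<omega> = ennreal (real_cond_exp M F f \<omega>)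
     \<and> real_cond_exp M F f \<omega> = enn2real (nn_cond_exp M F (\<lambda>\<omega>. ennreal (f \<omega>)) \<omega>)"
  proof -
    have fin: "(\<integral>\<^sup>+\<omega>. ennreal (f \<omega>) \<partial>M) \<noteq> \<infinity>" by (rule nn_fin_bounded[OF P]) (rule pos(2))
    show ?thesis by (rule nn_real_cond_exp[OF P S _ pos(1) fin]) simp
  qed
  then show ?thesis by (rule eventually_mono) (metis enn2real_nonneg)
qed

lemma indep_pair_ind:
  fixes X :: "'i \<Rightarrow> 'a \<Rightarrow> 'v::topological_space"
  assumes P: "prob_space M" and S: "subalgebra M F" and ind: "cond_indep_vars M F X I"
    and ij: "i \<in> I" "j \<in> I" "i \<noteq> j"
    and meas[measurable]: "X i \<in> borel_measurable M" "X j \<in> borel_measurable M"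
    and AB[measurable]: "A \<in> sets borel" "B \<in> sets borel"
  shows "AE \<omega> in M. nn_cond_exp M F (\<lambda>\<omega>. ennreal (indicator A (X i \<omega>) * indicator B (X j \<omega>))) \<omega>
     = nn_cond_exp M F (\<lambda>\<omega>. ennreal (indicator A (X i \<omega>))) \<omega> * nn_cond_exp M F (\<lambda>\<omega>. ennreal (indicator B (X j \<omega>))) \<omega>"
proof -
  define A' where "A' k = (if k = i then A else B)" for k
  have "AE \<omega> in M. real_cond_exp M F (\<lambda>\<omega>'. \<Prod>k\<in>{i,j}. indicator (A' k) (X k \<omega>')) \<omega>
                   = (\<Prod>k\<in>{i,j}. real_cond_exp M F (\<lambda>\<omega>'. indicator (A' k) (X k \<omega>')) \<omega>)"
  proof -
    have h: "{i,j} \<subseteq> I" "finite {i,j}" "\<And>k. k\<in>{i,j} \<Longrightarrow> A' k \<in> sets borel"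
      using ij AB unfolding A'_def by auto
    show ?thesis using ind[unfolded cond_indep_vars_def, rule_format, OF h] .
  qed
  then have 1: "AE \<omega> in M. real_cond_exp M F (\<lambda>\<omega>. indicator A (X i \<omega>) * indicator B (X j \<omega>)) \<omega>
     = real_cond_exp M F (\<lambda>\<omega>. indicator A (X i \<omega>)) \<omega> * real_cond_exp M F (\<lambda>\<omega>. indicator B (X j \<omega>)) \<omega>"
    using ij by (simp add: A'_def)
  have 2: "AE \<omega> in M. nn_cond_exp M F (\<lambda>\<omega>. ennreal (indicator A (X i \<omega>) * indicator B (X j \<omega>))) \<omega>
     = ennreal (real_cond_exp M F (\<lambda>\<omega>. indicator A (X i \<omega>) * indicator B (X j \<omega>)) \<omega>)"
  proof -
    have "AE \<omega> in M. nn_cond_exp M F (\<lambda>\<omega>. ennreal (indicator A (X i \<omega>) * indicator B (X j \<omega>))) \<omega>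
     = ennreal (real_cond_exp M F (\<lambda>\<omega>. indicator A (X i \<omega>) * indicator B (X j \<omega>)) \<omega>)
     \<and> real_cond_exp M F (\<lambda>\<omega>. indicator A (X i \<omega>) * indicator B (X j \<omega>)) \<omega> \<ge> 0"
      by (rule nn_real_cond_exp01[OF P S]) (auto simp: indicator_def)
    then show ?thesis by (rule eventually_mono) (rule conjunct1)
  qed
  have 3: "AE \<omega> in M. nn_cond_exp M F (\<lambda>\<omega>. ennreal (indicator A (X i \<omega>))) \<omega>
     = ennreal (real_cond_exp M F (\<lambda>\<omega>. indicator A (X i \<omega>)) \<omega>) \<and> real_cond_exp M F (\<lambda>\<omega>. indicator A (X i \<omega>)) \<omega> \<ge> 0"
    by (rule nn_real_cond_exp01[OF P S]) auto
  have 4: "AE \<omega> in M. nn_cond_exp M F (\<lambda>\<omega>. ennreal (indicator B (X j \<omega>))) \<omega>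
     = ennreal (real_cond_exp M F (\<lambda>\<omega>. indicator B (X j \<omega>)) \<omega>) \<and> real_cond_exp M F (\<lambda>\<omega>. indicator B (X j \<omega>)) \<omega> \<ge> 0"
    by (rule nn_real_cond_exp01[OF P S]) auto
  from 1 2 3 4 show ?thesis
    by eventually_elim (simp add: ennreal_mult)
qed


lemma indep_pair_nn:
  fixes X :: "'i \<Rightarrow> 'a \<Rightarrow> 'v::topological_space" and \<phi> \<psi> :: "'v \<Rightarrow> ennreal"
  assumes P: "prob_space M" and S: "subalgebra M F" and ind: "cond_indep_vars M F X I"
    and ij: "i \<in> I" "j \<in> I" "i \<noteq> j"
    and meas[measurable]: "X i \<in> borel_measurable M" "X j \<in> borel_measurable M"
    and phi[measurable]: "\<phi> \<in> borel_measurable borel" "\<psi> \<in> borel_measurable borel"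
  shows "(\<integral>\<^sup>+\<omega>. \<phi> (X i \<omega>) * \<psi> (X j \<omega>) \<partial>M)
       = (\<integral>\<^sup>+\<omega>. nn_cond_exp M F (\<lambda>\<omega>. \<phi> (X i \<omega>)) \<omega> * nn_cond_exp M F (\<lambda>\<omega>. \<psi> (X j \<omega>)) \<omega> \<partial>M)"
proof -
  interpret sigma_finite_subalgebra M F using sfs P S by blast
  have D1: "(\<integral>\<^sup>+\<omega>. indicator A (X i \<omega>) * indicator B (X j \<omega>) \<partial>M)
     = (\<integral>\<^sup>+\<omega>. nn_cond_exp M F (\<lambda>\<omega>. indicator A (X i \<omega>)) \<omega> * nn_cond_exp M F (\<lambda>\<omega>. indicator B (X j \<omega>)) \<omega> \<partial>M)"
    if [measurable]: "A \<in> sets borel" "B \<in> sets borel" for A B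
  proof -
    have e1: "(\<lambda>\<omega>. ennreal (indicator A (X i \<omega>) * indicator B (X j \<omega>))) = (\<lambda>\<omega>. indicator A (X i \<omega>) * indicator B (X j \<omega>))"
      by (auto simp: indicator_def fun_eq_iff)
    have e2: "(\<lambda>\<omega>. ennreal (indicator A (X i \<omega>))) = (\<lambda>\<omega>. indicator A (X i \<omega>))"
      "(\<lambda>\<omega>. ennreal (indicator B (X j \<omega>))) = (\<lambda>\<omega>. indicator B (X j \<omega>))"
      by (auto simp: indicator_def fun_eq_iff)
    have C: "AE \<omega> in M. nn_cond_exp M F (\<lambda>\<omega>. indicator A (X i \<omega>) * indicator B (X j \<omega>)) \<omega>
       = nn_cond_exp M F (\<lambda>\<omega>. indicator A (X i \<omega>)) \<omega> * nn_cond_exp M F (\<lambda>\<omega>. indicator B (X j \<omega>)) \<omega>"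
      using indep_pair_ind[OF P S ind ij meas that] unfolding e1 e2 .
    have "(\<integral>\<^sup>+\<omega>. indicator A (X i \<omega>) * indicator B (X j \<omega>) \<partial>M)
        = (\<integral>\<^sup>+\<omega>. (\<lambda>_. 1) \<omega> * (indicator A (X i \<omega>) * indicator B (X j \<omega>)) \<partial>M)" by simp
    also have "\<dots> = (\<integral>\<^sup>+\<omega>. (\<lambda>_. 1) \<omega> * nn_cond_exp M F (\<lambda>\<omega>. indicator A (X i \<omega>) * indicator B (X j \<omega>)) \<omega> \<partial>M)"
      by (rule nn_cond_exp_intg[symmetric]) auto
    also have "\<dots> = (\<integral>\<^sup>+\<omega>. nn_cond_exp M F (\<lambda>\<omega>. indicator A (X i \<omega>)) \<omega> * nn_cond_exp M F (\<lambda>\<omega>. indicator B (X j \<omega>)) \<omega> \<partial>M)"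
      using C by (intro nn_integral_cong_AE) auto
    finally show ?thesis .
  qed
  have D2: "(\<integral>\<^sup>+\<omega>. indicator B (X j \<omega>) * gg (X i \<omega>) \<partial>M)
     = (\<integral>\<^sup>+\<omega>. nn_cond_exp M F (\<lambda>\<omega>. indicator B (X j \<omega>)) \<omega> * gg (X i \<omega>) \<partial>M)"
    if [measurable]: "B \<in> sets borel" "gg \<in> borel_measurable borel" for B and gg :: "'v \<Rightarrow> ennreal"
  proof (rule nn_integral_ext_distr[where X="X i"])
    fix A :: "'v set" assume [measurable]: "A \<in> sets borel"
    have "(\<integral>\<^sup>+\<omega>. indicator B (X j \<omega>) * indicator A (X i \<omega>) \<partial>M)
       = (\<integral>\<^sup>+\<omega>. nn_cond_exp M F (\<lambda>\<omega>. indicator A (X i \<omega>)) \<omega> * nn_cond_exp M F (\<lambda>\<omega>. indicator B (X j \<omega>)) \<omega> \<partial>M)"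
      using D1[of A B] by (simp add: mult.commute)
    also have "\<dots> = (\<integral>\<^sup>+\<omega>. nn_cond_exp M F (\<lambda>\<omega>. indicator B (X j \<omega>)) \<omega> * nn_cond_exp M F (\<lambda>\<omega>. indicator A (X i \<omega>)) \<omega> \<partial>M)"
      by (simp add: mult.commute)
    also have "\<dots> = (\<integral>\<^sup>+\<omega>. nn_cond_exp M F (\<lambda>\<omega>. indicator B (X j \<omega>)) \<omega> * indicator A (X i \<omega>) \<partial>M)"
      by (rule nn_cond_exp_intg) auto
    finally show "(\<integral>\<^sup>+\<omega>. indicator B (X j \<omega>) * indicator A (X i \<omega>) \<partial>M)
       = (\<integral>\<^sup>+\<omega>. nn_cond_exp M F (\<lambda>\<omega>. indicator B (X j \<omega>)) \<omega> * indicator A (X i \<omega>) \<partial>M)" .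
  qed auto
  have D3: "(\<integral>\<^sup>+\<omega>. \<phi> (X i \<omega>) * indicator B (X j \<omega>) \<partial>M)
     = (\<integral>\<^sup>+\<omega>. nn_cond_exp M F (\<lambda>\<omega>. \<phi> (X i \<omega>)) \<omega> * indicator B (X j \<omega>) \<partial>M)"
    if [measurable]: "B \<in> sets borel" for B
  proof -
    have "(\<integral>\<^sup>+\<omega>. \<phi> (X i \<omega>) * indicator B (X j \<omega>) \<partial>M)
        = (\<integral>\<^sup>+\<omega>. nn_cond_exp M F (\<lambda>\<omega>. indicator B (X j \<omega>)) \<omega> * \<phi> (X i \<omega>) \<partial>M)"
      using D2[of B \<phi>] by (simp add: mult.commute)
    also have "\<dots> = (\<integral>\<^sup>+\<omega>. nn_cond_exp M F (\<lambda>\<omega>. indicator B (X j \<omega>)) \<omega> * nn_cond_exp M F (\<lambda>\<omega>. \<phi> (X i \<omega>)) \<omega> \<partial>M)"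
      by (rule nn_cond_exp_intg[symmetric]) auto
    also have "\<dots> = (\<integral>\<^sup>+\<omega>. nn_cond_exp M F (\<lambda>\<omega>. \<phi> (X i \<omega>)) \<omega> * nn_cond_exp M F (\<lambda>\<omega>. indicator B (X j \<omega>)) \<omega> \<partial>M)"
      by (simp add: mult.commute)
    also have "\<dots> = (\<integral>\<^sup>+\<omega>. nn_cond_exp M F (\<lambda>\<omega>. \<phi> (X i \<omega>)) \<omega> * indicator B (X j \<omega>) \<partial>M)"
      by (rule nn_cond_exp_intg) auto
    finally show ?thesis .
  qed
  have "(\<integral>\<^sup>+\<omega>. \<phi> (X i \<omega>) * \<psi> (X j \<omega>) \<partial>M)
     = (\<integral>\<^sup>+\<omega>. nn_cond_exp M F (\<lambda>\<omega>. \<phi> (X i \<omega>)) \<omega> * \<psi> (X j \<omega>) \<partial>M)"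
    by (rule nn_integral_ext_distr[where X="X j"]) (auto simp: D3)
  also have "\<dots> = (\<integral>\<^sup>+\<omega>. nn_cond_exp M F (\<lambda>\<omega>. \<phi> (X i \<omega>)) \<omega> * nn_cond_exp M F (\<lambda>\<omega>. \<psi> (X j \<omega>)) \<omega> \<partial>M)"
    by (rule nn_cond_exp_intg[symmetric]) auto
  finally show ?thesis .
qed

lemma indep_pair_R0:
  fixes X :: "'i \<Rightarrow> 'a \<Rightarrow> 'v::topological_space" and \<phi> \<psi> :: "'v \<Rightarrow> real"
  assumes P: "prob_space M" and S: "subalgebra M F" and ind: "cond_indep_vars M F X I"
    and ij: "i \<in> I" "j \<in> I" "i \<noteq> j"
    and meas[measurable]: "X i \<in> borel_measurable M" "X j \<in> borel_measurable M"
    and phi[measurable]: "\<phi> \<in> borel_measurable borel" "\<psi> \<in> borel_measurable borel"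
    and pos: "\<And>y. \<phi> y \<ge> 0" "\<And>y. \<psi> y \<ge> 0"
    and fin: "(\<integral>\<^sup>+\<omega>. ennreal (\<phi> (X i \<omega>)) \<partial>M) \<noteq> \<infinity>" "(\<integral>\<^sup>+\<omega>. ennreal (\<psi> (X j \<omega>)) \<partial>M) \<noteq> \<infinity>"
    and int: "integrable M (\<lambda>\<omega>. \<phi> (X i \<omega>) * \<psi> (X j \<omega>))"
  shows "integrable M (\<lambda>\<omega>. enn2real (nn_cond_exp M F (\<lambda>\<omega>. ennreal (\<phi> (X i \<omega>))) \<omega>)
                         * enn2real (nn_cond_exp M F (\<lambda>\<omega>. ennreal (\<psi> (X j \<omega>))) \<omega>))"
    and "(\<integral>\<omega>. \<phi> (X i \<omega>) * \<psi> (X j \<omega>) \<partial>M)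
       = (\<integral>\<omega>. enn2real (nn_cond_exp M F (\<lambda>\<omega>. ennreal (\<phi> (X i \<omega>))) \<omega>)
                         * enn2real (nn_cond_exp M F (\<lambda>\<omega>. ennreal (\<psi> (X j \<omega>))) \<omega>) \<partial>M)"
proof -
  define Ep where "Ep = nn_cond_exp M F (\<lambda>\<omega>. ennreal (\<phi> (X i \<omega>)))"
  define Eq where "Eq = nn_cond_exp M F (\<lambda>\<omega>. ennreal (\<psi> (X j \<omega>)))"
  have [measurable]: "Ep \<in> borel_measurable M" "Eq \<in> borel_measurable M" unfolding Ep_def Eq_def by auto
  have N: "(\<integral>\<^sup>+\<omega>. ennreal (\<phi> (X i \<omega>)) * ennreal (\<psi> (X j \<omega>)) \<partial>M) = (\<integral>\<^sup>+\<omega>. Ep \<omega> * Eq \<omega> \<partial>M)"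
    unfolding Ep_def Eq_def
    by (rule indep_pair_nn[OF P S ind ij meas, of "\<lambda>y. ennreal (\<phi> y)" "\<lambda>y. ennreal (\<psi> y)"]) auto
  have f1: "AE \<omega> in M. Ep \<omega> \<noteq> \<infinity>" unfolding Ep_def by (rule nn_cond_exp_fin[OF P S _ fin(1)]) simp
  have f2: "AE \<omega> in M. Eq \<omega> \<noteq> \<infinity>" unfolding Eq_def by (rule nn_cond_exp_fin[OF P S _ fin(2)]) simp
  have eq1: "(\<integral>\<^sup>+\<omega>. ennreal (enn2real (Ep \<omega>) * enn2real (Eq \<omega>)) \<partial>M) = (\<integral>\<^sup>+\<omega>. Ep \<omega> * Eq \<omega> \<partial>M)"
    using f1 f2 by (intro nn_integral_cong_AE) (auto simp: ennreal_mult ennreal_enn2real top.not_eq_extremum)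
  have eq2: "(\<integral>\<^sup>+\<omega>. ennreal (\<phi> (X i \<omega>) * \<psi> (X j \<omega>)) \<partial>M) = (\<integral>\<^sup>+\<omega>. ennreal (\<phi> (X i \<omega>)) * ennreal (\<psi> (X j \<omega>)) \<partial>M)"
    using pos by (intro nn_integral_cong) (auto simp: ennreal_mult)
  have fin3: "(\<integral>\<^sup>+\<omega>. ennreal (\<phi> (X i \<omega>) * \<psi> (X j \<omega>)) \<partial>M) < \<infinity>"
    using int pos by (subst (asm) integrable_iff_bounded) (auto simp: abs_mult)
  show "integrable M (\<lambda>\<omega>. enn2real (Ep \<omega>) * enn2real (Eq \<omega>))"
    using fin3 eq1 eq2 N by (intro integrableI_nonneg) auto
  have "(\<integral>\<omega>. \<phi> (X i \<omega>) * \<psi> (X j \<omega>) \<partial>M) = enn2real (\<integral>\<^sup>+\<omega>. ennreal (\<phi> (X i \<omega>) * \<psi> (X j \<omega>)) \<partial>M)"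
    using pos by (intro integral_eq_nn_integral) auto
  also have "\<dots> = enn2real (\<integral>\<^sup>+\<omega>. ennreal (enn2real (Ep \<omega>) * enn2real (Eq \<omega>)) \<partial>M)"
    using eq1 eq2 N by simp
  also have "\<dots> = (\<integral>\<omega>. enn2real (Ep \<omega>) * enn2real (Eq \<omega>) \<partial>M)"
    by (intro integral_eq_nn_integral[symmetric]) auto
  finally show "(\<integral>\<omega>. \<phi> (X i \<omega>) * \<psi> (X j \<omega>) \<partial>M) = (\<integral>\<omega>. enn2real (Ep \<omega>) * enn2real (Eq \<omega>) \<partial>M)" .
qed


lemma ennreal_max0: "ennreal (max 0 x) = ennreal x"
  by (cases "x \<ge> 0") (auto simp: max_def ennreal_neg)

lemma indep_pair_real:
  fixes X :: "'i \<Rightarrow> 'a \<Rightarrow> 'v::topological_space" and g :: "'v \<Rightarrow> real"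
  assumes P: "prob_space M" and S: "subalgebra M F" and ind: "cond_indep_vars M F X I"
    and ij: "i \<in> I" "j \<in> I" "i \<noteq> j"
    and meas[measurable]: "X i \<in> borel_measurable M" "X j \<in> borel_measurable M"
    and g[measurable]: "g \<in> borel_measurable borel"
    and int: "integrable M (\<lambda>\<omega>. g (X i \<omega>))" "integrable M (\<lambda>\<omega>. g (X j \<omega>))"
      "integrable M (\<lambda>\<omega>. g (X i \<omega>) * g (X j \<omega>))"
  shows "integrable M (\<lambda>\<omega>. real_cond_exp M F (\<lambda>\<omega>. g (X i \<omega>)) \<omega> * real_cond_exp M F (\<lambda>\<omega>. g (X j \<omega>)) \<omega>)"
    and "(\<integral>\<omega>. g (X i \<omega>) * g (X j \<omega>) \<partial>M)
       = (\<integral>\<omega>. real_cond_exp M F (\<lambda>\<omega>. g (X i \<omega>)) \<omega> * real_cond_exp M F (\<lambda>\<omega>. g (X j \<omega>)) \<omega> \<partial>M)"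
proof -
  define pp where "pp y = max 0 (g y)" for y
  define mm where "mm y = max 0 (- g y)" for y
  have [measurable]: "pp \<in> borel_measurable borel" "mm \<in> borel_measurable borel"
    unfolding pp_def mm_def by auto
  have gpm: "g y = pp y - mm y" for y unfolding pp_def mm_def by auto
  have pos: "pp y \<ge> 0" "mm y \<ge> 0" for y unfolding pp_def mm_def by auto
  have ep: "(\<lambda>\<omega>. ennreal (g (X k \<omega>))) = (\<lambda>\<omega>. ennreal (pp (X k \<omega>)))" for k
    unfolding pp_def by (simp add: ennreal_max0)
  have em: "(\<lambda>\<omega>. ennreal (- g (X k \<omega>))) = (\<lambda>\<omega>. ennreal (mm (X k \<omega>)))" for k
    unfolding mm_def by (simp add: ennreal_max0)
  define q where "q k \<omega> = enn2real (nn_cond_exp M F (\<lambda>\<omega>. ennreal (pp (X k \<omega>))) \<omega>)" for k \<omega>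
  define r where "r k \<omega> = enn2real (nn_cond_exp M F (\<lambda>\<omega>. ennreal (mm (X k \<omega>))) \<omega>)" for k \<omega>
  have rce: "real_cond_exp M F (\<lambda>\<omega>. g (X k \<omega>)) \<omega> = q k \<omega> - r k \<omega>" for k \<omega>
    unfolding real_cond_exp_def q_def r_def ep em ..
  have finI: "(\<integral>\<^sup>+\<omega>. ennreal (h (X k \<omega>)) \<partial>M) \<noteq> \<infinity>"
    if "integrable M (\<lambda>\<omega>. g (X k \<omega>))" "\<And>y. \<bar>h y\<bar> \<le> \<bar>g y\<bar>" for h :: "'v \<Rightarrow> real" and k
  proof -
    have "(\<integral>\<^sup>+\<omega>. ennreal (h (X k \<omega>)) \<partial>M) \<le> (\<integral>\<^sup>+\<omega>. ennreal (norm (g (X k \<omega>))) \<partial>M)"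
      using that(2) by (intro nn_integral_mono) (auto intro!: ennreal_leI simp: abs_le_iff)
    also have "\<dots> < \<infinity>" using that(1) by (simp add: integrable_iff_bounded)
    finally show ?thesis by simp
  qed
  have fins: "(\<integral>\<^sup>+\<omega>. ennreal (pp (X i \<omega>)) \<partial>M) \<noteq> \<infinity>" "(\<integral>\<^sup>+\<omega>. ennreal (mm (X i \<omega>)) \<partial>M) \<noteq> \<infinity>"
    "(\<integral>\<^sup>+\<omega>. ennreal (pp (X j \<omega>)) \<partial>M) \<noteq> \<infinity>" "(\<integral>\<^sup>+\<omega>. ennreal (mm (X j \<omega>)) \<partial>M) \<noteq> \<infinity>"
    using int by (auto intro!: finI simp: pp_def mm_def)
  have intb: "integrable M (\<lambda>\<omega>. h1 (X i \<omega>) * h2 (X j \<omega>))"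
    if "h1 \<in> {pp, mm}" "h2 \<in> {pp, mm}" for h1 h2
  proof (rule Bochner_Integration.integrable_bound[OF int(3)])
    show "(\<lambda>\<omega>. h1 (X i \<omega>) * h2 (X j \<omega>)) \<in> borel_measurable M" using that by auto
    show "AE \<omega> in M. norm (h1 (X i \<omega>) * h2 (X j \<omega>)) \<le> norm (g (X i \<omega>) * g (X j \<omega>))"
      using that by (auto simp: pp_def mm_def abs_mult intro!: mult_mono)
  qed
  have R: "integrable M (\<lambda>\<omega>. enn2real (nn_cond_exp M F (\<lambda>\<omega>. ennreal (h1 (X i \<omega>))) \<omega>)
                         * enn2real (nn_cond_exp M F (\<lambda>\<omega>. ennreal (h2 (X j \<omega>))) \<omega>))
     \<and> (\<integral>\<omega>. h1 (X i \<omega>) * h2 (X j \<omega>) \<partial>M)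
       = (\<integral>\<omega>. enn2real (nn_cond_exp M F (\<lambda>\<omega>. ennreal (h1 (X i \<omega>))) \<omega>)
                         * enn2real (nn_cond_exp M F (\<lambda>\<omega>. ennreal (h2 (X j \<omega>))) \<omega>) \<partial>M)"
    if "h1 \<in> {pp, mm}" "h2 \<in> {pp, mm}" for h1 h2
  proof -
    have [measurable]: "h1 \<in> borel_measurable borel" "h2 \<in> borel_measurable borel" using that by auto
    have "\<And>y. h1 y \<ge> 0" "\<And>y. h2 y \<ge> 0" using that pos by auto
    moreover have "(\<integral>\<^sup>+\<omega>. ennreal (h1 (X i \<omega>)) \<partial>M) \<noteq> \<infinity>" "(\<integral>\<^sup>+\<omega>. ennreal (h2 (X j \<omega>)) \<partial>M) \<noteq> \<infinity>"
      using that fins by auto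
    ultimately show ?thesis
      using indep_pair_R0[OF P S ind ij meas, of h1 h2] intb[OF that] by auto
  qed
  have Rpp: "integrable M (\<lambda>\<omega>. q i \<omega> * q j \<omega>)" "(\<integral>\<omega>. pp (X i \<omega>) * pp (X j \<omega>) \<partial>M) = (\<integral>\<omega>. q i \<omega> * q j \<omega> \<partial>M)"
    using R[of pp pp] unfolding q_def r_def by auto
  have Rpm: "integrable M (\<lambda>\<omega>. q i \<omega> * r j \<omega>)" "(\<integral>\<omega>. pp (X i \<omega>) * mm (X j \<omega>) \<partial>M) = (\<integral>\<omega>. q i \<omega> * r j \<omega> \<partial>M)"
    using R[of pp mm] unfolding q_def r_def by auto
  have Rmp: "integrable M (\<lambda>\<omega>. r i \<omega> * q j \<omega>)" "(\<integral>\<omega>. mm (X i \<omega>) * pp (X j \<omega>) \<partial>M) = (\<integral>\<omega>. r i \<omega> * q j \<omega> \<partial>M)"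
    using R[of mm pp] unfolding q_def r_def by auto
  have Rmm: "integrable M (\<lambda>\<omega>. r i \<omega> * r j \<omega>)" "(\<integral>\<omega>. mm (X i \<omega>) * mm (X j \<omega>) \<partial>M) = (\<integral>\<omega>. r i \<omega> * r j \<omega> \<partial>M)"
    using R[of mm mm] unfolding q_def r_def by auto
  have e1: "(\<lambda>\<omega>. real_cond_exp M F (\<lambda>\<omega>. g (X i \<omega>)) \<omega> * real_cond_exp M F (\<lambda>\<omega>. g (X j \<omega>)) \<omega>)
     = (\<lambda>\<omega>. ((q i \<omega> * q j \<omega> - q i \<omega> * r j \<omega>) - r i \<omega> * q j \<omega>) + r i \<omega> * r j \<omega>)"
    unfolding rce by (auto simp: fun_eq_iff algebra_simps)
  have e2: "(\<lambda>\<omega>. g (X i \<omega>) * g (X j \<omega>))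
     = (\<lambda>\<omega>. ((pp (X i \<omega>) * pp (X j \<omega>) - pp (X i \<omega>) * mm (X j \<omega>)) - mm (X i \<omega>) * pp (X j \<omega>)) + mm (X i \<omega>) * mm (X j \<omega>))"
    unfolding gpm by (auto simp: fun_eq_iff algebra_simps)
  show "integrable M (\<lambda>\<omega>. real_cond_exp M F (\<lambda>\<omega>. g (X i \<omega>)) \<omega> * real_cond_exp M F (\<lambda>\<omega>. g (X j \<omega>)) \<omega>)"
    unfolding e1 using Rpp Rpm Rmp Rmm by auto
  have ipp: "integrable M (\<lambda>\<omega>. pp (X i \<omega>) * pp (X j \<omega>))" "integrable M (\<lambda>\<omega>. pp (X i \<omega>) * mm (X j \<omega>))"
    "integrable M (\<lambda>\<omega>. mm (X i \<omega>) * pp (X j \<omega>))" "integrable M (\<lambda>\<omega>. mm (X i \<omega>) * mm (X j \<omega>))"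
    by (auto intro!: intb)
  show "(\<integral>\<omega>. g (X i \<omega>) * g (X j \<omega>) \<partial>M)
       = (\<integral>\<omega>. real_cond_exp M F (\<lambda>\<omega>. g (X i \<omega>)) \<omega> * real_cond_exp M F (\<lambda>\<omega>. g (X j \<omega>)) \<omega> \<partial>M)"
    unfolding e1 e2 using Rpp Rpm Rmp Rmm ipp by simp
qed

definition L2v :: "'a measure \<Rightarrow> ('a \<Rightarrow> 'v::real_normed_vector) \<Rightarrow> bool" where
  "L2v M U \<longleftrightarrow> U \<in> borel_measurable M \<and> integrable M (\<lambda>\<omega>. (norm (U \<omega>))\<^sup>2)"

lemma L2v_nn:
  assumes "U \<in> borel_measurable M" "(\<integral>\<^sup>+\<omega>. ennreal ((norm (U \<omega>))\<^sup>2) \<partial>M) < \<infinity>"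
  shows "L2v M U"
  unfolding L2v_def using assms by (auto intro!: integrableI_nonneg)

lemma L2v_int_bound:
  assumes "integrable M h" and [measurable]: "W \<in> borel_measurable M" "\<And>\<omega>. (norm (W \<omega>))\<^sup>2 \<le> h \<omega>"
  shows "L2v M W"
  unfolding L2v_def
proof
  show "W \<in> borel_measurable M" by fact
  show "integrable M (\<lambda>\<omega>. (norm (W \<omega>))\<^sup>2)"
  proof (rule Bochner_Integration.integrable_bound[OF assms(1)])
    show "(\<lambda>\<omega>. (norm (W \<omega>))\<^sup>2) \<in> borel_measurable M" by measurable
    show "AE \<omega> in M. norm ((norm (W \<omega>))\<^sup>2) \<le> norm (h \<omega>)"
      using assms(3) by (intro AE_I2) (metis abs_ge_self order_trans real_norm_def zero_le_power2 abs_of_nonneg)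
  qed
qed

lemma L2v_bound:
  assumes "L2v M U" "W \<in> borel_measurable M" "\<And>\<omega>. norm (W \<omega>) \<le> C * norm (U \<omega>)"
  shows "L2v M W"
proof (rule L2v_int_bound[OF _ assms(2)])
  show "integrable M (\<lambda>\<omega>. C\<^sup>2 * (norm (U \<omega>))\<^sup>2)" using assms(1) unfolding L2v_def by auto
  fix \<omega>
  have "(norm (W \<omega>))\<^sup>2 \<le> (C * norm (U \<omega>))\<^sup>2" using assms(3)[of \<omega>] by (intro power_mono) auto
  then show "(norm (W \<omega>))\<^sup>2 \<le> C\<^sup>2 * (norm (U \<omega>))\<^sup>2" by (simp add: power_mult_distrib)
qed

lemma L2v_add:
  fixes U W :: "'a \<Rightarrow> 'v::euclidean_space"
  assumes "L2v M U" "L2v M W" shows "L2v M (\<lambda>\<omega>. U \<omega> + W \<omega>)"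
proof (rule L2v_int_bound)
  show "integrable M (\<lambda>\<omega>. 2 * (norm (U \<omega>))\<^sup>2 + 2 * (norm (W \<omega>))\<^sup>2)" using assms unfolding L2v_def by auto
  have [measurable]: "U \<in> borel_measurable M" "W \<in> borel_measurable M" using assms unfolding L2v_def by auto
  show "(\<lambda>\<omega>. U \<omega> + W \<omega>) \<in> borel_measurable M" by measurable
  fix \<omega>
  have "(norm (U \<omega> + W \<omega>))\<^sup>2 \<le> (norm (U \<omega>) + norm (W \<omega>))\<^sup>2"
    by (intro power_mono norm_triangle_ineq) auto
  also have "\<dots> \<le> 2 * (norm (U \<omega>))\<^sup>2 + 2 * (norm (W \<omega>))\<^sup>2"
    using sum_squared_le_sum_of_squares[of "\<lambda>k. if k = (0::nat) then norm (U \<omega>) else norm (W \<omega>)" "{0,1}"]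
    by simp
  finally show "(norm (U \<omega> + W \<omega>))\<^sup>2 \<le> 2 * (norm (U \<omega>))\<^sup>2 + 2 * (norm (W \<omega>))\<^sup>2" .
qed

lemma L2v_uminus:
  fixes W :: "'a \<Rightarrow> 'v::euclidean_space"
  assumes "L2v M W" shows "L2v M (\<lambda>\<omega>. - W \<omega>)"
proof -
  have [measurable]: "W \<in> borel_measurable M" using assms unfolding L2v_def by auto
  show ?thesis by (rule L2v_bound[OF assms, of _ 1]) auto
qed

lemma L2v_diff:
  fixes U W :: "'a \<Rightarrow> 'v::euclidean_space"
  assumes "L2v M U" "L2v M W" shows "L2v M (\<lambda>\<omega>. U \<omega> - W \<omega>)"
  using L2v_add[OF assms(1) L2v_uminus[OF assms(2)]] by simp

lemma L2v_inner:
  fixes U W :: "'a \<Rightarrow> 'v::euclidean_space"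
  assumes "L2v M U" "L2v M W" shows "integrable M (\<lambda>\<omega>. U \<omega> \<bullet> W \<omega>)"
proof (rule Bochner_Integration.integrable_bound)
  show "integrable M (\<lambda>\<omega>. (norm (U \<omega>))\<^sup>2 + (norm (W \<omega>))\<^sup>2)" using assms unfolding L2v_def by auto
  have [measurable]: "U \<in> borel_measurable M" "W \<in> borel_measurable M" using assms unfolding L2v_def by auto
  show "(\<lambda>\<omega>. U \<omega> \<bullet> W \<omega>) \<in> borel_measurable M" by measurable
  have "norm (U \<omega> \<bullet> W \<omega>) \<le> norm ((norm (U \<omega>))\<^sup>2 + (norm (W \<omega>))\<^sup>2)" for \<omega>
  proof -
    have "norm (U \<omega> \<bullet> W \<omega>) \<le> norm (U \<omega>) * norm (W \<omega>)" using Cauchy_Schwarz_ineq2 by simp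
    moreover have "2 * norm (U \<omega>) * norm (W \<omega>) \<le> (norm (U \<omega>))\<^sup>2 + (norm (W \<omega>))\<^sup>2"
      using sum_squares_bound[of "norm (U \<omega>)" "norm (W \<omega>)"] by simp
    moreover have "0 \<le> norm (U \<omega>) * norm (W \<omega>)" by simp
    ultimately show ?thesis by simp
  qed
  then show "AE \<omega> in M. norm (U \<omega> \<bullet> W \<omega>) \<le> norm ((norm (U \<omega>))\<^sup>2 + (norm (W \<omega>))\<^sup>2)" by simp
qed

lemma L2v_comp:
  fixes U :: "'a \<Rightarrow> 'v::euclidean_space"
  assumes "L2v M U" "b \<in> Basis" shows "L2v M (\<lambda>\<omega>. (U \<omega> \<bullet> b) *\<^sub>R b)"
proof -
  have [measurable]: "U \<in> borel_measurable M" using assms unfolding L2v_def by auto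
  show ?thesis by (rule L2v_bound[OF assms(1), of _ 1]) (use assms in \<open>auto simp: Basis_le_norm\<close>)
qed

lemma L2v_comp_prod:
  fixes U W :: "'a \<Rightarrow> 'v::euclidean_space"
  assumes "L2v M U" "L2v M W" "b \<in> Basis" shows "integrable M (\<lambda>\<omega>. (U \<omega> \<bullet> b) * (W \<omega> \<bullet> b))"
  using L2v_inner[OF L2v_comp[OF assms(1,3)] L2v_comp[OF assms(2,3)]] assms(3) by (simp add: ac_simps)

lemma L2v_comp_int:
  fixes U :: "'a \<Rightarrow> 'v::euclidean_space"
  assumes "prob_space M" "L2v M U" shows "integrable M (\<lambda>\<omega>. U \<omega> \<bullet> b)"
proof -
  interpret prob_space M by fact
  have "L2v M (\<lambda>_. b)" unfolding L2v_def by auto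
  from L2v_inner[OF assms(2) this] show ?thesis .
qed

lemma norm_diff_sq_expand:
  fixes Y S :: "'v::real_inner"
  shows "(norm (Y - a *\<^sub>R S))\<^sup>2 = (norm Y)\<^sup>2 - 2 * a * (Y \<bullet> S) + a\<^sup>2 * (S \<bullet> S)"
  by (simp add: power2_norm_eq_inner inner_diff_left inner_diff_right inner_commute algebra_simps)
    (simp add: power2_eq_square)

lemma random_step:
  fixes Y :: "'a \<Rightarrow> 'v::euclidean_space" and n :: "'i \<Rightarrow> 'a \<Rightarrow> 'v"
  assumes P: "prob_space M" and S: "subalgebra M Fs"
    and fin: "finite J"
    and Ymeas: "Y \<in> borel_measurable Fs" and LY: "L2v M Y"
    and Ln: "\<And>i. i \<in> J \<Longrightarrow> L2v M (n i)"
    and nvar: "\<And>i. i \<in> J \<Longrightarrow> (\<integral>\<omega>. (norm (n i \<omega>))\<^sup>2 \<partial>M) \<le> \<sigma>\<^sup>2"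
    and zm: "\<And>i b. i \<in> J \<Longrightarrow> b \<in> Basis \<Longrightarrow> AE \<omega> in M. real_cond_exp M Fs (\<lambda>\<omega>. n i \<omega> \<bullet> b) \<omega> = 0"
    and orth: "\<And>i j b. i \<in> J \<Longrightarrow> j \<in> J \<Longrightarrow> i \<noteq> j \<Longrightarrow> b \<in> Basis \<Longrightarrow>
        (\<integral>\<omega>. (n i \<omega> \<bullet> b) * (n j \<omega> \<bullet> b) \<partial>M) = 0"
  shows "(\<integral>\<^sup>+\<omega>. ennreal ((norm (Y \<omega> - a *\<^sub>R (\<Sum>i\<in>J. n i \<omega>)))\<^sup>2) \<partial>M)
     \<le> (\<integral>\<^sup>+\<omega>. ennreal ((norm (Y \<omega>))\<^sup>2) \<partial>M) + ennreal (a\<^sup>2 * real (card J) * \<sigma>\<^sup>2)"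
proof -
  interpret sigma_finite_subalgebra M Fs using sfs P S by blast
  have [measurable]: "Y \<in> borel_measurable M" using LY unfolding L2v_def by auto
  have nm[measurable]: "n i \<in> borel_measurable M" if "i \<in> J" for i using Ln[OF that] unfolding L2v_def by auto
  have expand: "(norm (Y \<omega> - a *\<^sub>R (\<Sum>i\<in>J. n i \<omega>)))\<^sup>2
     = (norm (Y \<omega>))\<^sup>2 - 2 * a * (\<Sum>i\<in>J. Y \<omega> \<bullet> n i \<omega>) + a\<^sup>2 * (\<Sum>i\<in>J. \<Sum>j\<in>J. n i \<omega> \<bullet> n j \<omega>)" for \<omega>
    unfolding norm_diff_sq_expand by (simp add: inner_sum_left inner_sum_right) (rule disjI2, rule sum.swap)
  have iYY: "integrable M (\<lambda>\<omega>. (norm (Y \<omega>))\<^sup>2)" using LY unfolding L2v_def by auto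
  have iYn: "integrable M (\<lambda>\<omega>. Y \<omega> \<bullet> n i \<omega>)" if "i \<in> J" for i by (rule L2v_inner[OF LY Ln[OF that]])
  have inn: "integrable M (\<lambda>\<omega>. n i \<omega> \<bullet> n j \<omega>)" if "i \<in> J" "j \<in> J" for i j
    by (rule L2v_inner[OF Ln[OF that(1)] Ln[OF that(2)]])
  have comp: "(\<integral>\<omega>. U \<omega> \<bullet> W \<omega> \<partial>M) = (\<Sum>b\<in>Basis. \<integral>\<omega>. (U \<omega> \<bullet> b) * (W \<omega> \<bullet> b) \<partial>M)"
    if "L2v M U" "L2v M W" for U W :: "'a \<Rightarrow> 'v"
  proof -
    have "(\<integral>\<omega>. U \<omega> \<bullet> W \<omega> \<partial>M) = (\<integral>\<omega>. (\<Sum>b\<in>Basis. (U \<omega> \<bullet> b) * (W \<omega> \<bullet> b)) \<partial>M)"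
      by (rule Bochner_Integration.integral_cong[OF refl], rule euclidean_inner)
    also have "\<dots> = (\<Sum>b\<in>Basis. \<integral>\<omega>. (U \<omega> \<bullet> b) * (W \<omega> \<bullet> b) \<partial>M)"
      by (rule Bochner_Integration.integral_sum) (rule L2v_comp_prod[OF that])
    finally show ?thesis .
  qed
  have Yn0: "(\<integral>\<omega>. Y \<omega> \<bullet> n i \<omega> \<partial>M) = 0" if i: "i \<in> J" for i
  proof -
    have "(\<integral>\<omega>. (Y \<omega> \<bullet> b) * (n i \<omega> \<bullet> b) \<partial>M) = 0" if b: "b \<in> Basis" for b
    proof -
      have [measurable]: "(\<lambda>\<omega>. Y \<omega> \<bullet> b) \<in> borel_measurable Fs" using Ymeas by measurable
      have "(\<integral>\<omega>. (Y \<omega> \<bullet> b) * (n i \<omega> \<bullet> b) \<partial>M) = (\<integral>\<omega>. (Y \<omega> \<bullet> b) * real_cond_exp M Fs (\<lambda>\<omega>. n i \<omega> \<bullet> b) \<omega> \<partial>M)"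
        by (rule real_cond_exp_intg(2)[symmetric]) (auto intro: L2v_comp_prod[OF LY Ln[OF i] b] simp: i)
      also have "\<dots> = (\<integral>\<omega>. 0 \<partial>M)"
        using zm[OF i b] by (intro integral_cong_AE) (auto simp: i)
      finally show ?thesis by simp
    qed
    then show ?thesis using comp[OF LY Ln[OF i]] by simp
  qed
  have nn: "(\<integral>\<omega>. n i \<omega> \<bullet> n j \<omega> \<partial>M) = (if i = j then (\<integral>\<omega>. (norm (n i \<omega>))\<^sup>2 \<partial>M) else 0)"
    if "i \<in> J" "j \<in> J" for i j
  proof (cases "i = j")
    case True then show ?thesis by (simp add: power2_norm_eq_inner)
  next
    case False
    then show ?thesis using comp[OF Ln[OF that(1)] Ln[OF that(2)]] orth[OF that False] by simp
  qed
  have int_all: "integrable M (\<lambda>\<omega>. (norm (Y \<omega>))\<^sup>2 - 2 * a * (\<Sum>i\<in>J. Y \<omega> \<bullet> n i \<omega>) + a\<^sup>2 * (\<Sum>i\<in>J. \<Sum>j\<in>J. n i \<omega> \<bullet> n j \<omega>))"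
    using iYY iYn inn by (auto intro!: Bochner_Integration.integrable_sum)
  have val: "(\<integral>\<omega>. (norm (Y \<omega>))\<^sup>2 - 2 * a * (\<Sum>i\<in>J. Y \<omega> \<bullet> n i \<omega>) + a\<^sup>2 * (\<Sum>i\<in>J. \<Sum>j\<in>J. n i \<omega> \<bullet> n j \<omega>) \<partial>M)
     = (\<integral>\<omega>. (norm (Y \<omega>))\<^sup>2 \<partial>M) + a\<^sup>2 * (\<Sum>i\<in>J. \<integral>\<omega>. (norm (n i \<omega>))\<^sup>2 \<partial>M)"
  proof -
    have s1: "(\<integral>\<omega>. (\<Sum>i\<in>J. Y \<omega> \<bullet> n i \<omega>) \<partial>M) = 0"
    proof -
      have "(\<integral>\<omega>. (\<Sum>i\<in>J. Y \<omega> \<bullet> n i \<omega>) \<partial>M) = (\<Sum>i\<in>J. \<integral>\<omega>. Y \<omega> \<bullet> n i \<omega> \<partial>M)"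
        by (rule Bochner_Integration.integral_sum) (rule iYn)
      also have "\<dots> = 0" using Yn0 by simp
      finally show ?thesis .
    qed
    have s2: "(\<integral>\<omega>. (\<Sum>i\<in>J. \<Sum>j\<in>J. n i \<omega> \<bullet> n j \<omega>) \<partial>M) = (\<Sum>i\<in>J. \<integral>\<omega>. (\<Sum>j\<in>J. n i \<omega> \<bullet> n j \<omega>) \<partial>M)"
      by (rule Bochner_Integration.integral_sum) (rule Bochner_Integration.integrable_sum, rule inn, assumption+)
    have s3: "(\<integral>\<omega>. (\<Sum>j\<in>J. n i \<omega> \<bullet> n j \<omega>) \<partial>M) = (\<integral>\<omega>. (norm (n i \<omega>))\<^sup>2 \<partial>M)" if i: "i \<in> J" for i
    proof -
      have "(\<integral>\<omega>. (\<Sum>j\<in>J. n i \<omega> \<bullet> n j \<omega>) \<partial>M) = (\<Sum>j\<in>J. \<integral>\<omega>. n i \<omega> \<bullet> n j \<omega> \<partial>M)"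
        by (rule Bochner_Integration.integral_sum) (rule inn[OF i])
      also have "\<dots> = (\<Sum>j\<in>J. if i = j then (\<integral>\<omega>. (norm (n i \<omega>))\<^sup>2 \<partial>M) else 0)"
        by (rule sum.cong[OF refl]) (rule nn[OF i])
      also have "\<dots> = (\<integral>\<omega>. (norm (n i \<omega>))\<^sup>2 \<partial>M)"
        using fin i by (simp add: sum.delta)
      finally show ?thesis .
    qed
    have s2': "(\<integral>\<omega>. (\<Sum>i\<in>J. \<Sum>j\<in>J. n i \<omega> \<bullet> n j \<omega>) \<partial>M) = (\<Sum>i\<in>J. \<integral>\<omega>. (norm (n i \<omega>))\<^sup>2 \<partial>M)"
      unfolding s2 by (rule sum.cong[OF refl]) (rule s3)
    have iS1: "integrable M (\<lambda>\<omega>. \<Sum>i\<in>J. Y \<omega> \<bullet> n i \<omega>)"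
      by (rule Bochner_Integration.integrable_sum) (rule iYn)
    have iS2: "integrable M (\<lambda>\<omega>. \<Sum>i\<in>J. \<Sum>j\<in>J. n i \<omega> \<bullet> n j \<omega>)"
      by (rule Bochner_Integration.integrable_sum, rule Bochner_Integration.integrable_sum, rule inn, assumption+)
    have "(\<integral>\<omega>. (norm (Y \<omega>))\<^sup>2 - 2 * a * (\<Sum>i\<in>J. Y \<omega> \<bullet> n i \<omega>) + a\<^sup>2 * (\<Sum>i\<in>J. \<Sum>j\<in>J. n i \<omega> \<bullet> n j \<omega>) \<partial>M)
       = (\<integral>\<omega>. (norm (Y \<omega>))\<^sup>2 - 2 * a * (\<Sum>i\<in>J. Y \<omega> \<bullet> n i \<omega>) \<partial>M) + (\<integral>\<omega>. a\<^sup>2 * (\<Sum>i\<in>J. \<Sum>j\<in>J. n i \<omega> \<bullet> n j \<omega>) \<partial>M)"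
      by (rule Bochner_Integration.integral_add) (use iYY iS1 iS2 in auto)
    also have "(\<integral>\<omega>. (norm (Y \<omega>))\<^sup>2 - 2 * a * (\<Sum>i\<in>J. Y \<omega> \<bullet> n i \<omega>) \<partial>M)
       = (\<integral>\<omega>. (norm (Y \<omega>))\<^sup>2 \<partial>M) - (\<integral>\<omega>. 2 * a * (\<Sum>i\<in>J. Y \<omega> \<bullet> n i \<omega>) \<partial>M)"
      by (rule Bochner_Integration.integral_diff) (use iYY iS1 in auto)
    also have "(\<integral>\<omega>. 2 * a * (\<Sum>i\<in>J. Y \<omega> \<bullet> n i \<omega>) \<partial>M) = 2 * a * (\<integral>\<omega>. (\<Sum>i\<in>J. Y \<omega> \<bullet> n i \<omega>) \<partial>M)"
      by (rule integral_mult_right_zero)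
    also have "(\<integral>\<omega>. a\<^sup>2 * (\<Sum>i\<in>J. \<Sum>j\<in>J. n i \<omega> \<bullet> n j \<omega>) \<partial>M) = a\<^sup>2 * (\<integral>\<omega>. (\<Sum>i\<in>J. \<Sum>j\<in>J. n i \<omega> \<bullet> n j \<omega>) \<partial>M)"
      by (rule integral_mult_right_zero)
    finally have "(\<integral>\<omega>. (norm (Y \<omega>))\<^sup>2 - 2 * a * (\<Sum>i\<in>J. Y \<omega> \<bullet> n i \<omega>) + a\<^sup>2 * (\<Sum>i\<in>J. \<Sum>j\<in>J. n i \<omega> \<bullet> n j \<omega>) \<partial>M)
       = (\<integral>\<omega>. (norm (Y \<omega>))\<^sup>2 \<partial>M) - 2 * a * (\<integral>\<omega>. (\<Sum>i\<in>J. Y \<omega> \<bullet> n i \<omega>) \<partial>M)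
         + a\<^sup>2 * (\<integral>\<omega>. (\<Sum>i\<in>J. \<Sum>j\<in>J. n i \<omega> \<bullet> n j \<omega>) \<partial>M)" .
    then show ?thesis using s1 s2' by simp
  qed
  have "(\<integral>\<^sup>+\<omega>. ennreal ((norm (Y \<omega> - a *\<^sub>R (\<Sum>i\<in>J. n i \<omega>)))\<^sup>2) \<partial>M)
      = ennreal (\<integral>\<omega>. (norm (Y \<omega> - a *\<^sub>R (\<Sum>i\<in>J. n i \<omega>)))\<^sup>2 \<partial>M)"
    using int_all unfolding expand[symmetric] by (intro nn_integral_eq_integral) auto
  also have "\<dots> = ennreal ((\<integral>\<omega>. (norm (Y \<omega>))\<^sup>2 \<partial>M) + a\<^sup>2 * (\<Sum>i\<in>J. \<integral>\<omega>. (norm (n i \<omega>))\<^sup>2 \<partial>M))"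
    unfolding expand val ..
  also have "\<dots> \<le> ennreal ((\<integral>\<omega>. (norm (Y \<omega>))\<^sup>2 \<partial>M) + a\<^sup>2 * (real (card J) * \<sigma>\<^sup>2))"
  proof (intro ennreal_leI add_left_mono mult_left_mono)
    have "(\<Sum>i\<in>J. \<integral>\<omega>. (norm (n i \<omega>))\<^sup>2 \<partial>M) \<le> (\<Sum>i\<in>J. \<sigma>\<^sup>2)" by (intro sum_mono nvar)
    then show "(\<Sum>i\<in>J. \<integral>\<omega>. (norm (n i \<omega>))\<^sup>2 \<partial>M) \<le> real (card J) * \<sigma>\<^sup>2" by simp
  qed simp
  also have "\<dots> = ennreal (\<integral>\<omega>. (norm (Y \<omega>))\<^sup>2 \<partial>M) + ennreal (a\<^sup>2 * real (card J) * \<sigma>\<^sup>2)"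
    by (subst ennreal_plus) (auto simp: mult.assoc)
  also have "ennreal (\<integral>\<omega>. (norm (Y \<omega>))\<^sup>2 \<partial>M) = (\<integral>\<^sup>+\<omega>. ennreal ((norm (Y \<omega>))\<^sup>2) \<partial>M)"
    using iYY by (intro nn_integral_eq_integral[symmetric]) auto
  finally show ?thesis .
qed

theorem mainTheorem7:
  fixes M :: "'a measure"
    and F :: "nat \<Rightarrow> 'a measure"
    and f :: "'v::euclidean_space \<Rightarrow> real"
    and gradf :: "'v \<Rightarrow> 'v"
    and xstar :: 'v
    and L c \<alpha> \<sigma> B :: real
    and p :: nat
    and I :: "nat \<Rightarrow> nat set"
    and x :: "nat \<Rightarrow> 'a \<Rightarrow> 'v"
    and v :: "nat \<Rightarrow> nat \<Rightarrow> 'a \<Rightarrow> 'v"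
    and G :: "nat \<Rightarrow> nat \<Rightarrow> 'a \<Rightarrow> 'v"
    and x0 :: 'v
  assumes prob: "prob_space M"
    and filt: "filtration (space M) F"
    and sub: "\<And>t. subalgebra M (F t)"
    \<comment> \<open>f differentiable with gradient gradf, L-Lipschitz gradient, c-strongly convex, minimizer xstar\<close>
    and grad: "\<And>y. GDERIV f y :> gradf y"
    and lip: "L-lipschitz_on UNIV gradf"
    and c_pos: "c > 0"
    and strong: "\<And>y z. (y - z) \<bullet> (gradf y - gradf z) \<ge> c * (norm (y - z))\<^sup>2"
    and minimizer: "\<And>y. f xstar \<le> f y"
    \<comment> \<open>parameters\<close>
    and p_pos: "p > 0"
    and alpha_pos: "\<alpha> > 0"
    and alpha_le: "\<alpha> \<le> 1 / (4 * L)"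
    and B_pos: "B > 0"
    \<comment> \<open>active processor sets\<close>
    and I_sub: "\<And>t. I t \<subseteq> {1..p}"
    and I_card: "\<And>t. real p / 2 \<le> real (card (I t))"
    \<comment> \<open>iterates, views and stochastic gradients\<close>
    and x_init: "x 0 = (\<lambda>\<omega>. x0)"
    and x_meas: "\<And>t. x t \<in> borel_measurable (F t)"
    and v_meas: "\<And>t i. i \<in> I t \<Longrightarrow> v t i \<in> borel_measurable (F t)"
    and G_meas: "\<And>t i. i \<in> I t \<Longrightarrow> G t i \<in> borel_measurable (F (Suc t))"
    and G_int: "\<And>t i. i \<in> I t \<Longrightarrow> integrable M (G t i)"
    and G_indep: "\<And>t. cond_indep_vars M (F t) (G t) (I t)"
    and G_unbiased: "\<And>t i b. i \<in> I t \<Longrightarrow> b \<in> Basis \<Longrightarrow>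
        AE \<omega> in M. real_cond_exp M (F t) (\<lambda>\<omega>'. G t i \<omega>' \<bullet> b) \<omega> = gradf (v t i \<omega>) \<bullet> b"
    and G_var: "\<And>t i. i \<in> I t \<Longrightarrow>
        AE \<omega> in M. nn_cond_exp M (F t) (\<lambda>\<omega>'. ennreal ((norm (G t i \<omega>' - gradf (v t i \<omega>')))\<^sup>2)) \<omega>
                    \<le> ennreal (\<sigma>\<^sup>2)"
    and update: "\<And>t \<omega>. x (Suc t) \<omega> = x t \<omega> - (\<alpha> / real p) *\<^sub>R (\<Sum>i\<in>I t. G t i \<omega>)"
    \<comment> \<open>elastic consistency\<close>
    and elastic: "\<And>t i. i \<in> I t \<Longrightarrow>
        (\<integral>\<^sup>+ \<omega>. ennreal ((norm (x t \<omega> - v t i \<omega>))\<^sup>2) \<partial>M) \<le> ennreal (\<alpha>\<^sup>2 * B\<^sup>2)"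
  shows "\<And>t. (\<integral>\<^sup>+ \<omega>. ennreal ((norm (x (Suc t) \<omega> - xstar))\<^sup>2) \<partial>M)
           \<le> ennreal (1 - \<alpha> * c / 4) * (\<integral>\<^sup>+ \<omega>. ennreal ((norm (x t \<omega> - xstar))\<^sup>2) \<partial>M)
              + ennreal (2 * \<alpha>^3 * L\<^sup>2 * B\<^sup>2 / c + 2 * \<alpha>\<^sup>2 * \<sigma>\<^sup>2 / real p
                         + 4 * L\<^sup>2 * \<alpha>^4 * B\<^sup>2)"
proof -
  fix t
  interpret prob_space M by (rule prob)
  have L0: "L \<ge> 0" using lip by (rule lipschitz_on_nonneg)
  have L: "L > 0"
  proof (rule ccontr)
    assume "\<not> L > 0" then have "L = 0" using L0 by simp
    then show False using alpha_le alpha_pos by simp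
  qed
  have gradm[measurable]: "gradf \<in> borel_measurable borel"
    by (rule borel_measurable_continuous_onI[OF lipschitz_on_continuous_on[OF lip]])
  have mono: "(y - z) \<bullet> (gradf y - gradf z) \<ge> 0" for y z
    using strong[of y z] c_pos by (meson mult_nonneg_nonneg less_imp_le zero_le_power2 order_trans)
  have coco: "(norm (gradf y))\<^sup>2 \<le> 2 * L * ((y - xstar) \<bullet> gradf y)" for y
    by (rule cocoercive[OF grad lip L mono minimizer])
  have g0: "gradf xstar = 0" using coco[of xstar] by simp
  have strongx: "(y - xstar) \<bullet> gradf y \<ge> c * (norm (y - xstar))\<^sup>2" for y
    using strong[of y xstar] by (simp add: g0)
  have cL: "c \<le> L"
  proof -
    obtain b :: 'v where b: "b \<in> Basis" using nonempty_Basis by blast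
    have "c * (norm (b - 0))\<^sup>2 \<le> (b - 0) \<bullet> (gradf b - gradf 0)" by (rule strong)
    also have "\<dots> \<le> norm (b - 0) * norm (gradf b - gradf 0)" by (rule norm_cauchy_schwarz)
    also have "\<dots> \<le> norm (b - 0) * (L * norm (b - 0))"
      using lipschitz_onD[OF lip, of b 0] by (intro mult_left_mono) (auto simp: dist_norm)
    finally show ?thesis using b by (simp add: power2_eq_square)
  qed
  have coefpos: "1 - \<alpha> * c / 4 > 0"
  proof -
    have "\<alpha> * c \<le> \<alpha> * L" using cL alpha_pos by simp
    also have "\<dots> \<le> 1 / 4" using alpha_le L by (simp add: field_simps)
    finally show ?thesis by simp
  qed
  define It where "It = I t"
  define k where "k = card It"
  have finIt: "finite It" unfolding It_def using I_sub[of t] by (rule finite_subset) simp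
  have kp: "k \<le> p" unfolding k_def It_def using card_mono[OF _ I_sub[of t]] by simp
  have pk: "real p \<le> 2 * real k" using I_card[of t] unfolding k_def It_def by simp
  have S: "subalgebra M (F t)" by (rule sub)
  interpret sigma_finite_subalgebra M "F t" using sfs[OF prob S] .
  have xm[measurable]: "x t \<in> borel_measurable M" by (rule measurable_from_subalg[OF S x_meas])
  have vm: "v t i \<in> borel_measurable M" if "i \<in> It" for i
    by (rule measurable_from_subalg[OF S v_meas]) (use that It_def in simp)
  have Gm: "G t i \<in> borel_measurable M" if "i \<in> It" for i
    by (rule measurable_from_subalg[OF sub G_meas]) (use that It_def in simp)
  define D where "D = (\<integral>\<^sup>+ \<omega>. ennreal ((norm (x t \<omega> - xstar))\<^sup>2) \<partial>M)"
  define C where "C = 2 * \<alpha>^3 * L\<^sup>2 * B\<^sup>2 / c + 2 * \<alpha>\<^sup>2 * \<sigma>\<^sup>2 / real p + 4 * L\<^sup>2 * \<alpha>^4 * B\<^sup>2"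
  show "(\<integral>\<^sup>+ \<omega>. ennreal ((norm (x (Suc t) \<omega> - xstar))\<^sup>2) \<partial>M) \<le> ennreal (1 - \<alpha> * c / 4) * D + ennreal C"
    unfolding D_def[symmetric] C_def[symmetric]
  proof (cases "D = \<infinity>")
    case True
    then have "ennreal (1 - \<alpha> * c / 4) * D = \<infinity>" using coefpos by (simp add: ennreal_top_mult_left)
    then show ?thesis by simp
  next
    case False
    have Dfin: "D < \<infinity>" using False by (simp add: top.not_eq_extremum)
    define d where "d \<omega> = x t \<omega> - xstar" for \<omega>
    define gv where "gv i \<omega> = gradf (v t i \<omega>)" for i \<omega>
    define n where "n i \<omega> = G t i \<omega> - gv i \<omega>" for i \<omega>
    define e where "e i \<omega> = x t \<omega> - v t i \<omega>" for i \<omega>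
    define Y where "Y \<omega> = d \<omega> - (\<alpha> / real p) *\<^sub>R (\<Sum>i\<in>It. gv i \<omega>)" for \<omega>
    define K where "K = (2 * \<alpha> / c + 2 * \<alpha>\<^sup>2) * (real k * L\<^sup>2 / (real p)\<^sup>2)"
    have K0: "K \<ge> 0" unfolding K_def using c_pos alpha_pos by auto
    have dm[measurable]: "d \<in> borel_measurable M" unfolding d_def by measurable
    have em: "e i \<in> borel_measurable M" if "i \<in> It" for i
      unfolding e_def using vm[OF that] by measurable
    have gvm: "gv i \<in> borel_measurable M" if "i \<in> It" for i
      unfolding gv_def using vm[OF that] by measurable
    have gvmF: "gv i \<in> borel_measurable (F t)" if "i \<in> It" for i
    proof -
      have [measurable]: "v t i \<in> borel_measurable (F t)" using v_meas that unfolding It_def by blast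
      show ?thesis unfolding gv_def by measurable
    qed
    have nm: "n i \<in> borel_measurable M" if "i \<in> It" for i
      unfolding n_def using gvm[OF that] Gm[OF that] by measurable
    have YmF: "Y \<in> borel_measurable (F t)"
    proof -
      have [measurable]: "x t \<in> borel_measurable (F t)" by (rule x_meas)
      have "(\<lambda>\<omega>. \<Sum>i\<in>It. gv i \<omega>) \<in> borel_measurable (F t)"
        using gvmF by (auto intro!: borel_measurable_sum)
      then show ?thesis unfolding Y_def d_def by measurable
    qed
    have Ym: "Y \<in> borel_measurable M" by (rule measurable_from_subalg[OF S YmF])
    have Ld: "L2v M d" using Dfin unfolding D_def d_def by (intro L2v_nn) auto
    have Le: "L2v M (e i)" if "i \<in> It" for i
      using elastic[of i t] that em[OF that] unfolding It_def e_def
      by (intro L2v_nn) (auto simp: e_def intro: le_less_trans)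
    have eint: "(\<integral>\<omega>. (norm (e i \<omega>))\<^sup>2 \<partial>M) \<le> \<alpha>\<^sup>2 * B\<^sup>2" if "i \<in> It" for i
    proof -
      have "ennreal (\<integral>\<omega>. (norm (e i \<omega>))\<^sup>2 \<partial>M) = (\<integral>\<^sup>+\<omega>. ennreal ((norm (e i \<omega>))\<^sup>2) \<partial>M)"
        using Le[OF that] unfolding L2v_def by (intro nn_integral_eq_integral[symmetric]) auto
      also have "\<dots> \<le> ennreal (\<alpha>\<^sup>2 * B\<^sup>2)" using elastic[of i t] that unfolding It_def e_def by simp
      finally show ?thesis by simp
    qed
    have Lgv: "L2v M (gv i)" if i: "i \<in> It" for i
    proof (rule L2v_int_bound[OF _ gvm[OF i]])
      show "integrable M (\<lambda>\<omega>. 2 * L\<^sup>2 * (norm (d \<omega>))\<^sup>2 + 2 * L\<^sup>2 * (norm (e i \<omega>))\<^sup>2)"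
        using Ld Le[OF i] unfolding L2v_def by auto
      fix \<omega>
      have "norm (gv i \<omega>) = norm (gradf (v t i \<omega>) - gradf xstar)" unfolding gv_def g0 by simp
      also have "\<dots> \<le> L * norm (v t i \<omega> - xstar)"
        using lipschitz_onD[OF lip, of "v t i \<omega>" xstar] by (simp add: dist_norm)
      also have "\<dots> \<le> L * (norm (d \<omega>) + norm (e i \<omega>))"
      proof -
        have "v t i \<omega> - xstar = d \<omega> - e i \<omega>" unfolding d_def e_def by simp
        then have "norm (v t i \<omega> - xstar) \<le> norm (d \<omega>) + norm (e i \<omega>)" using norm_triangle_ineq4 by metis
        then show ?thesis using L0 by (intro mult_left_mono) auto
      qed
      finally have "(norm (gv i \<omega>))\<^sup>2 \<le> (L * (norm (d \<omega>) + norm (e i \<omega>)))\<^sup>2" by (intro power_mono) auto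
      also have "\<dots> = L\<^sup>2 * (norm (d \<omega>) + norm (e i \<omega>))\<^sup>2" by (simp add: power_mult_distrib)
      also have "\<dots> \<le> L\<^sup>2 * (2 * (norm (d \<omega>))\<^sup>2 + 2 * (norm (e i \<omega>))\<^sup>2)"
      proof (intro mult_left_mono)
        show "(norm (d \<omega>) + norm (e i \<omega>))\<^sup>2 \<le> 2 * (norm (d \<omega>))\<^sup>2 + 2 * (norm (e i \<omega>))\<^sup>2"
          using sum_squared_le_sum_of_squares[of "\<lambda>k. if k = (0::nat) then norm (d \<omega>) else norm (e i \<omega>)" "{0,1}"]
          by simp
      qed simp
      finally show "(norm (gv i \<omega>))\<^sup>2 \<le> 2 * L\<^sup>2 * (norm (d \<omega>))\<^sup>2 + 2 * L\<^sup>2 * (norm (e i \<omega>))\<^sup>2"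
        by (simp add: algebra_simps)
    qed
    have nvarnn: "(\<integral>\<^sup>+\<omega>. ennreal ((norm (n i \<omega>))\<^sup>2) \<partial>M) \<le> ennreal (\<sigma>\<^sup>2)" if i: "i \<in> It" for i
    proof -
      have [measurable]: "n i \<in> borel_measurable M" by (rule nm[OF i])
      have "(\<integral>\<^sup>+\<omega>. ennreal ((norm (n i \<omega>))\<^sup>2) \<partial>M)
          = (\<integral>\<^sup>+\<omega>. (\<lambda>_. 1) \<omega> * ennreal ((norm (n i \<omega>))\<^sup>2) \<partial>M)" by simp
      also have "\<dots> = (\<integral>\<^sup>+\<omega>. (\<lambda>_. 1) \<omega> * nn_cond_exp M (F t) (\<lambda>\<omega>. ennreal ((norm (n i \<omega>))\<^sup>2)) \<omega> \<partial>M)"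
        by (rule nn_cond_exp_intg[symmetric]) auto
      also have "\<dots> \<le> (\<integral>\<^sup>+\<omega>. ennreal (\<sigma>\<^sup>2) \<partial>M)"
        using G_var[of i t] i unfolding It_def n_def gv_def by (intro nn_integral_mono_AE) auto
      also have "\<dots> = ennreal (\<sigma>\<^sup>2)" by (simp add: emeasure_space_1)
      finally show ?thesis .
    qed
    have Ln: "L2v M (n i)" if i: "i \<in> It" for i
      using nvarnn[OF i] nm[OF i] by (intro L2v_nn) (auto intro: le_less_trans)
    have nvar: "(\<integral>\<omega>. (norm (n i \<omega>))\<^sup>2 \<partial>M) \<le> \<sigma>\<^sup>2" if i: "i \<in> It" for i
    proof -
      have "ennreal (\<integral>\<omega>. (norm (n i \<omega>))\<^sup>2 \<partial>M) = (\<integral>\<^sup>+\<omega>. ennreal ((norm (n i \<omega>))\<^sup>2) \<partial>M)"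
        using Ln[OF i] unfolding L2v_def by (intro nn_integral_eq_integral[symmetric]) auto
      also have "\<dots> \<le> ennreal (\<sigma>\<^sup>2)" by (rule nvarnn[OF i])
      finally show ?thesis by simp
    qed
    have LG: "L2v M (G t i)" if i: "i \<in> It" for i
    proof -
      have "L2v M (\<lambda>\<omega>. n i \<omega> + gv i \<omega>)" by (rule L2v_add[OF Ln[OF i] Lgv[OF i]])
      then show ?thesis unfolding n_def by simp
    qed
    have PB: "(norm (Y \<omega>))\<^sup>2 \<le> (1 - \<alpha> * c / 4) * (norm (d \<omega>))\<^sup>2 + K * (\<Sum>i\<in>It. (norm (e i \<omega>))\<^sup>2)" for \<omega>
      unfolding Y_def d_def e_def gv_def K_def k_def
      by (rule det_bound[OF L c_pos alpha_pos alpha_le lip coco strongx p_pos]) (use kp pk k_def in auto)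
    have intH: "integrable M (\<lambda>\<omega>. (1 - \<alpha> * c / 4) * (norm (d \<omega>))\<^sup>2 + K * (\<Sum>i\<in>It. (norm (e i \<omega>))\<^sup>2))"
      using Ld Le unfolding L2v_def by auto
    have LY: "L2v M Y" by (rule L2v_int_bound[OF intH Ym PB])
    have Ybound: "(\<integral>\<omega>. (norm (Y \<omega>))\<^sup>2 \<partial>M) \<le> (1 - \<alpha> * c / 4) * (\<integral>\<omega>. (norm (d \<omega>))\<^sup>2 \<partial>M) + K * (real k * (\<alpha>\<^sup>2 * B\<^sup>2))"
    proof -
      have "(\<integral>\<omega>. (norm (Y \<omega>))\<^sup>2 \<partial>M) \<le> (\<integral>\<omega>. (1 - \<alpha> * c / 4) * (norm (d \<omega>))\<^sup>2 + K * (\<Sum>i\<in>It. (norm (e i \<omega>))\<^sup>2) \<partial>M)"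
        using LY intH PB unfolding L2v_def by (intro integral_mono) auto
      also have "\<dots> = (1 - \<alpha> * c / 4) * (\<integral>\<omega>. (norm (d \<omega>))\<^sup>2 \<partial>M) + K * (\<Sum>i\<in>It. \<integral>\<omega>. (norm (e i \<omega>))\<^sup>2 \<partial>M)"
        using Ld Le unfolding L2v_def by (simp add: Bochner_Integration.integral_sum)
      also have "\<dots> \<le> (1 - \<alpha> * c / 4) * (\<integral>\<omega>. (norm (d \<omega>))\<^sup>2 \<partial>M) + K * (\<Sum>i\<in>It. \<alpha>\<^sup>2 * B\<^sup>2)"
        using eint K0 by (intro add_left_mono mult_left_mono sum_mono) auto
      finally show ?thesis unfolding k_def by simp
    qed
    have zm: "AE \<omega> in M. real_cond_exp M (F t) (\<lambda>\<omega>. n i \<omega> \<bullet> b) \<omega> = 0" if i: "i \<in> It" and b: "b \<in> Basis" for i b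
    proof -
      have iI: "i \<in> I t" using i unfolding It_def .
      have [measurable]: "gv i \<in> borel_measurable (F t)" by (rule gvmF[OF i])
      have ig: "integrable M (\<lambda>\<omega>. G t i \<omega> \<bullet> b)" by (rule L2v_comp_int[OF prob LG[OF i]])
      have ia: "integrable M (\<lambda>\<omega>. gv i \<omega> \<bullet> b)" by (rule L2v_comp_int[OF prob Lgv[OF i]])
      have fe: "(\<lambda>\<omega>. n i \<omega> \<bullet> b) = (\<lambda>\<omega>. G t i \<omega> \<bullet> b - gv i \<omega> \<bullet> b)"
        unfolding n_def by (simp add: inner_diff_left)
      have 1: "AE \<omega> in M. real_cond_exp M (F t) (\<lambda>\<omega>. G t i \<omega> \<bullet> b - gv i \<omega> \<bullet> b) \<omega>
          = real_cond_exp M (F t) (\<lambda>\<omega>. G t i \<omega> \<bullet> b) \<omega> - real_cond_exp M (F t) (\<lambda>\<omega>. gv i \<omega> \<bullet> b) \<omega>"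
        by (rule real_cond_exp_diff[OF ig ia])
      have 2: "AE \<omega> in M. real_cond_exp M (F t) (\<lambda>\<omega>. G t i \<omega> \<bullet> b) \<omega> = gv i \<omega> \<bullet> b"
        using G_unbiased[OF iI b] unfolding gv_def .
      have 3: "AE \<omega> in M. real_cond_exp M (F t) (\<lambda>\<omega>. gv i \<omega> \<bullet> b) \<omega> = gv i \<omega> \<bullet> b"
        by (rule real_cond_exp_F_meas[OF ia]) measurable
      from 1 2 3 show ?thesis unfolding fe by eventually_elim simp
    qed

    have orth: "(\<integral>\<omega>. (n i \<omega> \<bullet> b) * (n j \<omega> \<bullet> b) \<partial>M) = 0"
      if i: "i \<in> It" and j: "j \<in> It" and ij: "i \<noteq> j" and b: "b \<in> Basis" for i j b
    proof -
      have iI: "i \<in> I t" and jI: "j \<in> I t" using i j unfolding It_def by auto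
      have [measurable]: "gv i \<in> borel_measurable (F t)" "gv j \<in> borel_measurable (F t)"
        by (rule gvmF[OF i], rule gvmF[OF j])
      have [measurable]: "gv i \<in> borel_measurable M" "gv j \<in> borel_measurable M"
        by (rule gvm[OF i], rule gvm[OF j])
      have [measurable]: "G t i \<in> borel_measurable M" "G t j \<in> borel_measurable M" by (rule Gm[OF i], rule Gm[OF j])
      have igg: "integrable M (\<lambda>\<omega>. (G t i \<omega> \<bullet> b) * (G t j \<omega> \<bullet> b))" by (rule L2v_comp_prod[OF LG[OF i] LG[OF j] b])
      have iag: "integrable M (\<lambda>\<omega>. (gv i \<omega> \<bullet> b) * (G t j \<omega> \<bullet> b))" by (rule L2v_comp_prod[OF Lgv[OF i] LG[OF j] b])
      have iga: "integrable M (\<lambda>\<omega>. (gv j \<omega> \<bullet> b) * (G t i \<omega> \<bullet> b))" by (rule L2v_comp_prod[OF Lgv[OF j] LG[OF i] b])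
      have iaa: "integrable M (\<lambda>\<omega>. (gv i \<omega> \<bullet> b) * (gv j \<omega> \<bullet> b))" by (rule L2v_comp_prod[OF Lgv[OF i] Lgv[OF j] b])
      have igi: "integrable M (\<lambda>\<omega>. G t i \<omega> \<bullet> b)" by (rule L2v_comp_int[OF prob LG[OF i]])
      have igj: "integrable M (\<lambda>\<omega>. G t j \<omega> \<bullet> b)" by (rule L2v_comp_int[OF prob LG[OF j]])
      have ui: "AE \<omega> in M. real_cond_exp M (F t) (\<lambda>\<omega>. G t i \<omega> \<bullet> b) \<omega> = gv i \<omega> \<bullet> b"
        using G_unbiased[OF iI b] unfolding gv_def .
      have uj: "AE \<omega> in M. real_cond_exp M (F t) (\<lambda>\<omega>. G t j \<omega> \<bullet> b) \<omega> = gv j \<omega> \<bullet> b"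
        using G_unbiased[OF jI b] unfolding gv_def .
      have e1: "(\<integral>\<omega>. (G t i \<omega> \<bullet> b) * (G t j \<omega> \<bullet> b) \<partial>M) = (\<integral>\<omega>. (gv i \<omega> \<bullet> b) * (gv j \<omega> \<bullet> b) \<partial>M)"
      proof -
        have "(\<integral>\<omega>. (G t i \<omega> \<bullet> b) * (G t j \<omega> \<bullet> b) \<partial>M)
           = (\<integral>\<omega>. real_cond_exp M (F t) (\<lambda>\<omega>. G t i \<omega> \<bullet> b) \<omega> * real_cond_exp M (F t) (\<lambda>\<omega>. G t j \<omega> \<bullet> b) \<omega> \<partial>M)"
          using indep_pair_real(2)[OF prob S G_indep[of t] iI jI ij Gm[OF i] Gm[OF j], of "\<lambda>y. y \<bullet> b"] igi igj igg
          by simp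
        also have "\<dots> = (\<integral>\<omega>. (gv i \<omega> \<bullet> b) * (gv j \<omega> \<bullet> b) \<partial>M)"
          using ui uj by (intro integral_cong_AE) auto
        finally show ?thesis .
      qed
      have e2: "(\<integral>\<omega>. (gv i \<omega> \<bullet> b) * (G t j \<omega> \<bullet> b) \<partial>M) = (\<integral>\<omega>. (gv i \<omega> \<bullet> b) * (gv j \<omega> \<bullet> b) \<partial>M)"
      proof -
        have "(\<integral>\<omega>. (gv i \<omega> \<bullet> b) * (G t j \<omega> \<bullet> b) \<partial>M)
           = (\<integral>\<omega>. (gv i \<omega> \<bullet> b) * real_cond_exp M (F t) (\<lambda>\<omega>. G t j \<omega> \<bullet> b) \<omega> \<partial>M)"
          by (rule real_cond_exp_intg(2)[symmetric, OF iag]) auto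
        also have "\<dots> = (\<integral>\<omega>. (gv i \<omega> \<bullet> b) * (gv j \<omega> \<bullet> b) \<partial>M)"
          using uj by (intro integral_cong_AE) auto
        finally show ?thesis .
      qed
      have e3: "(\<integral>\<omega>. (gv j \<omega> \<bullet> b) * (G t i \<omega> \<bullet> b) \<partial>M) = (\<integral>\<omega>. (gv i \<omega> \<bullet> b) * (gv j \<omega> \<bullet> b) \<partial>M)"
      proof -
        have "(\<integral>\<omega>. (gv j \<omega> \<bullet> b) * (G t i \<omega> \<bullet> b) \<partial>M)
           = (\<integral>\<omega>. (gv j \<omega> \<bullet> b) * real_cond_exp M (F t) (\<lambda>\<omega>. G t i \<omega> \<bullet> b) \<omega> \<partial>M)"
          by (rule real_cond_exp_intg(2)[symmetric, OF iga]) auto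
        also have "\<dots> = (\<integral>\<omega>. (gv i \<omega> \<bullet> b) * (gv j \<omega> \<bullet> b) \<partial>M)"
          using ui by (intro integral_cong_AE) (auto simp: mult.commute)
        finally show ?thesis .
      qed
      have fe: "(\<lambda>\<omega>. (n i \<omega> \<bullet> b) * (n j \<omega> \<bullet> b)) = (\<lambda>\<omega>. (G t i \<omega> \<bullet> b) * (G t j \<omega> \<bullet> b)
          - (gv i \<omega> \<bullet> b) * (G t j \<omega> \<bullet> b) - (gv j \<omega> \<bullet> b) * (G t i \<omega> \<bullet> b) + (gv i \<omega> \<bullet> b) * (gv j \<omega> \<bullet> b))"
        unfolding n_def by (auto simp: fun_eq_iff inner_diff_left algebra_simps)
      show ?thesis unfolding fe using igg iag iga iaa e1 e2 e3 by simp
    qed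

    have RS: "(\<integral>\<^sup>+\<omega>. ennreal ((norm (Y \<omega> - (\<alpha> / real p) *\<^sub>R (\<Sum>i\<in>It. n i \<omega>)))\<^sup>2) \<partial>M)
       \<le> (\<integral>\<^sup>+\<omega>. ennreal ((norm (Y \<omega>))\<^sup>2) \<partial>M) + ennreal ((\<alpha> / real p)\<^sup>2 * real (card It) * \<sigma>\<^sup>2)"
      by (rule random_step[OF prob S finIt YmF LY Ln nvar zm orth])
    have xs: "x (Suc t) \<omega> - xstar = Y \<omega> - (\<alpha> / real p) *\<^sub>R (\<Sum>i\<in>It. n i \<omega>)" for \<omega>
      unfolding update Y_def n_def d_def It_def
      by (simp add: sum_subtractf algebra_simps scaleR_diff_right)
    have Yeq: "(\<integral>\<^sup>+\<omega>. ennreal ((norm (Y \<omega>))\<^sup>2) \<partial>M) = ennreal (\<integral>\<omega>. (norm (Y \<omega>))\<^sup>2 \<partial>M)"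
      using LY unfolding L2v_def by (intro nn_integral_eq_integral) auto
    have Deq: "D = ennreal (\<integral>\<omega>. (norm (d \<omega>))\<^sup>2 \<partial>M)"
      using Ld unfolding L2v_def D_def d_def by (intro nn_integral_eq_integral) auto
    define Id where "Id = (\<integral>\<omega>. (norm (d \<omega>))\<^sup>2 \<partial>M)"
    have Id0: "Id \<ge> 0" unfolding Id_def by simp
    have IY0: "(\<integral>\<omega>. (norm (Y \<omega>))\<^sup>2 \<partial>M) \<ge> 0" by simp
    have const: "K * (real k * (\<alpha>\<^sup>2 * B\<^sup>2)) + (\<alpha> / real p)\<^sup>2 * real k * \<sigma>\<^sup>2 \<le> C"
    proof -
      have r1: "real k * real k / (real p)\<^sup>2 \<le> 1"
      proof -
        have "real k * real k \<le> real p * real p" using kp by (intro mult_mono) auto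
        then show ?thesis using p_pos by (simp add: power2_eq_square)
      qed
      have r2: "real k / (real p)\<^sup>2 \<le> 1 / real p"
        using kp p_pos by (simp add: power2_eq_square field_simps)
      define A where "A = (2 * \<alpha> / c + 2 * \<alpha>\<^sup>2) * L\<^sup>2 * (\<alpha>\<^sup>2 * B\<^sup>2)"
      have A0: "A \<ge> 0" unfolding A_def using alpha_pos c_pos by auto
      have "K * (real k * (\<alpha>\<^sup>2 * B\<^sup>2)) = A * (real k * real k / (real p)\<^sup>2)"
        unfolding K_def A_def by (simp add: field_simps)
      also have "\<dots> \<le> A * 1" using r1 A0 by (intro mult_left_mono) auto
      finally have t1: "K * (real k * (\<alpha>\<^sup>2 * B\<^sup>2)) \<le> A" by simp
      have "(\<alpha> / real p)\<^sup>2 * real k * \<sigma>\<^sup>2 = (\<alpha>\<^sup>2 * \<sigma>\<^sup>2) * (real k / (real p)\<^sup>2)"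
        by (simp add: power_divide field_simps)
      also have "\<dots> \<le> (\<alpha>\<^sup>2 * \<sigma>\<^sup>2) * (1 / real p)" using r2 by (intro mult_left_mono) auto
      finally have t2: "(\<alpha> / real p)\<^sup>2 * real k * \<sigma>\<^sup>2 \<le> \<alpha>\<^sup>2 * \<sigma>\<^sup>2 / real p" by simp
      have t3: "\<alpha>\<^sup>2 * \<sigma>\<^sup>2 / real p \<ge> 0" by simp
      have A_eq: "A = 2 * \<alpha>^3 * L\<^sup>2 * B\<^sup>2 / c + 2 * L\<^sup>2 * \<alpha>^4 * B\<^sup>2"
        unfolding A_def using c_pos by (simp add: field_simps power2_eq_square power3_eq_cube power4_eq_xxxx)
      have t4: "L\<^sup>2 * \<alpha>^4 * B\<^sup>2 \<ge> 0" by simp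
      show ?thesis using t1 t2 t3 t4 A_eq unfolding C_def by linarith
    qed

    have "(\<integral>\<^sup>+ \<omega>. ennreal ((norm (x (Suc t) \<omega> - xstar))\<^sup>2) \<partial>M)
        \<le> ennreal (\<integral>\<omega>. (norm (Y \<omega>))\<^sup>2 \<partial>M) + ennreal ((\<alpha> / real p)\<^sup>2 * real k * \<sigma>\<^sup>2)"
      using RS unfolding xs Yeq k_def .
    also have "\<dots> = ennreal ((\<integral>\<omega>. (norm (Y \<omega>))\<^sup>2 \<partial>M) + (\<alpha> / real p)\<^sup>2 * real k * \<sigma>\<^sup>2)"
      using IY0 by (subst ennreal_plus) auto
    also have "\<dots> \<le> ennreal ((1 - \<alpha> * c / 4) * Id + C)"
      using Ybound const unfolding Id_def by (intro ennreal_leI) linarith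
    also have "\<dots> = ennreal (1 - \<alpha> * c / 4) * D + ennreal C"
    proof -
      have "C \<ge> 0" unfolding C_def using c_pos p_pos alpha_pos
        by (intro add_nonneg_nonneg divide_nonneg_pos mult_nonneg_nonneg) auto
      then show ?thesis unfolding Deq Id_def[symmetric] using coefpos Id0 by (simp add: ennreal_mult)
    qed
    finally show ?thesis .
  qed
qed

end
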